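(* For $S\subseteq\mathbb N$, let $\mathcal H(S)=\{(i,j)\in\mathbb N\times\mathbb N: i+j\in S\}$. The following are equivalent: (1) $\mathcal H(S)$ is Schur bounded; (2) $\mathcal H(S)$ is the union of a row finite set and a column finite set; (3) $\sup_{k\ge0}|S\cap(2^{k-1},2^k]|<\infty$; (4) $S$ is the union of finitely many lacunary sets.
   Context: A pattern $\mathcal P\subseteq\mathbb N\times\mathbb N$ is Schur bounded if every matrix supported on $\mathcal P$ (zero off $\mathcal P$) with all entries of modulus at most $1$ defines a bounded Schur multiplier $T=[t_{ij}]\mapsto[s_{ij}t_{ij}]$ on $\mathcal B(\ell^2)$. A pattern is row finite if there is $k$ with at most $k$ elements of the pattern in each row; column finite is defined analogously. A set $\{s_1<s_2<\cdots\}\subseteq\mathbb N$ is lacunary if there is $q>1$ with $s_{i+1}/s_i>q$ for all $i\ge1$ (finite sets count as lacunary). *)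

theory Defs
  imports "HOL-Analysis.Analysis" "HOL-Library.Infinite_Set"
begin

text \<open>Infinite matrices indexed by nat, complex entries. A matrix T defines a bounded
operator on l2 with norm at most C iff all its finite sections have (bilinear-form) norm at most C.\<close>

definition matrix_bound :: "(nat \<Rightarrow> nat \<Rightarrow> complex) \<Rightarrow> real \<Rightarrow> bool" where
  "matrix_bound T C \<longleftrightarrow>
     (\<forall>n (x::nat \<Rightarrow> complex) (y::nat \<Rightarrow> complex).
        (\<Sum>j<n. (cmod (x j))^2) \<le> 1 \<longrightarrow> (\<Sum>i<n. (cmod (y i))^2) \<le> 1 \<longrightarrow>
        cmod (\<Sum>i<n. \<Sum>j<n. y i * T i j * x j) \<le> C)"

definition bounded_matrix :: "(nat \<Rightarrow> nat \<Rightarrow> complex) \<Rightarrow> bool" where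
  "bounded_matrix T \<longleftrightarrow> (\<exists>C. matrix_bound T C)"

definition bounded_schur_multiplier :: "(nat \<Rightarrow> nat \<Rightarrow> complex) \<Rightarrow> bool" where
  "bounded_schur_multiplier s \<longleftrightarrow>
     (\<exists>K. \<forall>T C. matrix_bound T C \<longrightarrow> matrix_bound (\<lambda>i j. s i j * T i j) (K * C))"

definition schur_bounded :: "(nat \<times> nat) set \<Rightarrow> bool" where
  "schur_bounded P \<longleftrightarrow>
     (\<forall>s. (\<forall>i j. (i, j) \<notin> P \<longrightarrow> s i j = 0) \<longrightarrow> (\<forall>i j. cmod (s i j) \<le> 1)
          \<longrightarrow> bounded_schur_multiplier s)"

definition row_finite :: "(nat \<times> nat) set \<Rightarrow> bool" where
  "row_finite P \<longleftrightarrow> (\<exists>k::nat. \<forall>i. finite {j. (i, j) \<in> P} \<and> card {j. (i, j) \<in> P} \<le> k)"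

definition column_finite :: "(nat \<times> nat) set \<Rightarrow> bool" where
  "column_finite P \<longleftrightarrow> (\<exists>k::nat. \<forall>j. finite {i. (i, j) \<in> P} \<and> card {i. (i, j) \<in> P} \<le> k)"

definition lacunary :: "nat set \<Rightarrow> bool" where
  "lacunary A \<longleftrightarrow> finite A \<or>
     (\<exists>q::real. q > 1 \<and> (\<forall>i. real (enumerate A (Suc i)) > q * real (enumerate A i)))"

definition hankel_pattern :: "nat set \<Rightarrow> (nat \<times> nat) set" where
  "hankel_pattern S = {(i, j). i + j \<in> S}"

end

theory Submission
  imports Defs
begin

definition blk :: "nat \<Rightarrow> nat set" where
  "blk k = {n. 2^k < 2*n \<and> n \<le> 2^k}"

lemma blk_finite[simp]: "finite (blk k)"
  unfolding blk_def by (rule finite_subset[of _ "{..2^k}"]) auto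

lemma blk_pos: "n \<in> blk k \<Longrightarrow> n \<ge> 1"
  unfolding blk_def by (cases n) auto

lemma in_some_blk:
  assumes "n \<ge> 1" shows "\<exists>k. n \<in> blk k"
proof -
  have ex: "\<exists>k. n \<le> 2^k" using less_exp[of n] by (meson less_imp_le)
  define k where "k = (LEAST k. n \<le> 2^k)"
  have nk: "n \<le> 2^k" unfolding k_def by (rule LeastI_ex[OF ex])
  show ?thesis
  proof (cases k)
    case 0 then show ?thesis using nk assms by (intro exI[of _ 0]) (auto simp: blk_def)
  next
    case (Suc k')
    have "\<not> n \<le> 2^k'" using Suc unfolding k_def
      by (metis Suc k_def lessI not_less_Least)
    then show ?thesis using nk Suc by (intro exI[of _ k]) (auto simp: blk_def)
  qed
qed

lemma blk_cover:
  assumes "i \<in> blk k" "i \<le> n" "n \<le> 2*i"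
  shows "n \<in> blk k \<or> n \<in> blk (Suc k)"
  using assms unfolding blk_def by auto

lemma card_blk2:
  assumes "\<forall>k. card (S \<inter> blk k) \<le> M" "i \<ge> 1"
  shows "card (S \<inter> {i..2*i}) \<le> 2*M"
proof -
  obtain k where k: "i \<in> blk k" using in_some_blk assms(2) by blast
  have "S \<inter> {i..2*i} \<subseteq> (S \<inter> blk k) \<union> (S \<inter> blk (Suc k))"
  proof
    fix x assume x: "x \<in> S \<inter> {i..2*i}"
    then have "x \<in> blk k \<or> x \<in> blk (Suc k)" using blk_cover[OF k, of x] by auto
    then show "x \<in> (S \<inter> blk k) \<union> (S \<inter> blk (Suc k))" using x by auto
  qed
  then have "card (S \<inter> {i..2*i}) \<le> card ((S \<inter> blk k) \<union> (S \<inter> blk (Suc k)))"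
    by (intro card_mono) auto
  also have "\<dots> \<le> card (S \<inter> blk k) + card (S \<inter> blk (Suc k))" by (rule card_Un_le)
  also have "\<dots> \<le> 2*M" using assms(1) by (metis add_mono mult_2)
  finally show ?thesis .
qed

lemma enum_range_strict_mono:
  assumes "strict_mono (g::nat\<Rightarrow>nat)" shows "enumerate (range g) n = g n"
  using assms
proof (induction n arbitrary: g)
  case 0
  have "(LEAST n. n \<in> range g) = g 0"
  proof (rule Least_equality)
    show "g 0 \<in> range g" by auto
    fix y assume "y \<in> range g" then obtain i where "y = g i" by auto
    then show "g 0 \<le> y" using 0 by (simp add: strict_mono_leD)
  qed
  then show ?case by (simp only: enumerate_0)
next
  case (Suc n)
  have e0: "enumerate (range g) 0 = g 0"
  proof -
    have "(LEAST n. n \<in> range g) = g 0"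
    proof (rule Least_equality)
      show "g 0 \<in> range g" by auto
      fix y assume "y \<in> range g" then obtain i where "y = g i" by auto
      then show "g 0 \<le> y" using Suc.prems by (simp add: strict_mono_leD)
    qed
    then show ?thesis by (simp only: enumerate_0)
  qed
  have r: "range g - {g 0} = range (\<lambda>i. g (Suc i))"
  proof
    show "range g - {g 0} \<subseteq> range (\<lambda>i. g (Suc i))"
    proof
      fix y assume "y \<in> range g - {g 0}"
      then obtain i where "y = g i" "i \<noteq> 0" by auto
      then show "y \<in> range (\<lambda>i. g (Suc i))" by (cases i) auto
    qed
    show "range (\<lambda>i. g (Suc i)) \<subseteq> range g - {g 0}"
      using Suc.prems by (auto simp: strict_mono_eq)
  qed
  have sm: "strict_mono (\<lambda>i. g (Suc i))" using Suc.prems by (simp add: strict_mono_def)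
  show ?case using Suc.IH[OF sm] e0 r by (simp only: enumerate_Suc')
qed

lemma lac_bound:
  assumes "lacunary A" shows "\<exists>c. \<forall>k. card (A \<inter> blk k) \<le> c"
proof (cases "finite A")
  case True
  then show ?thesis by (intro exI[of _ "card A"]) (auto intro: card_mono)
next
  case False
  then obtain q :: real where q: "q > 1" "\<And>i. real (enumerate A (Suc i)) > q * real (enumerate A i)"
    using assms unfolding lacunary_def by auto
  define e where "e = enumerate A"
  obtain m0 where m0: "2 < q ^ m0" using real_arch_pow[OF q(1)] by blast
  have grow: "real (e (i + d)) \<ge> q ^ d * real (e i)" for i d
  proof (induction d)
    case 0 then show ?case by simp
  next
    case (Suc d)
    have "q ^ Suc d * real (e i) = q * (q ^ d * real (e i))" by simp
    also have "\<dots> \<le> q * real (e (i + d))" using Suc q(1) by (intro mult_left_mono) auto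
    also have "\<dots> \<le> real (e (i + Suc d))" using q(2)[of "i+d"] unfolding e_def by simp
    finally show ?case .
  qed
  have rng: "range e = A" unfolding e_def using False by (simp add: range_enumerate)
  have "card (A \<inter> blk k) \<le> m0" for k
  proof -
    define I where "I = {i. e i \<in> blk k}"
    have AI: "A \<inter> blk k = e ` I" unfolding I_def using rng by auto
    show ?thesis
    proof (cases "I = {}")
      case True then show ?thesis using AI by simp
    next
      case False
      define i0 where "i0 = Least (\<lambda>i. i \<in> I)"
      obtain i1 where "i1 \<in> I" using False by blast
      then have i0I: "i0 \<in> I" unfolding i0_def by (rule LeastI)
      have sub: "I \<subseteq> {i0..<i0+m0}"
      proof
        fix i assume iI: "i \<in> I"
        have "i0 \<le> i" unfolding i0_def using iI by (simp add: Least_le)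
        moreover have "i < i0 + m0"
        proof (rule ccontr)
          assume "\<not> i < i0 + m0"
          define d where "d = i - i0"
          have d: "i = i0 + d" "d \<ge> m0" using \<open>\<not> i < i0 + m0\<close> unfolding d_def by auto
          have pos: "real (e i0) \<ge> 1" using i0I blk_pos unfolding I_def by auto
          have "q ^ m0 \<le> q ^ d" using d q by (simp add: power_increasing)
          then have "2 < q ^ d" using m0 by linarith
          then have "2 * real (e i0) < q ^ d * real (e i0)" using pos by (intro mult_strict_right_mono) auto
          also have "\<dots> \<le> real (e i)" using grow[of d i0] d by simp
          finally have "2 * e i0 < e i" by linarith
          moreover have "2^k < 2 * e i0" "e i \<le> 2^k" using i0I iI unfolding I_def blk_def by auto
          ultimately show False by linarith
        qed
        ultimately show "i \<in> {i0..<i0+m0}" by auto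
      qed
      have finI: "finite I" using finite_subset[OF sub] by simp
      have "card (A \<inter> blk k) \<le> card I" unfolding AI using card_image_le[OF finI] by simp
      also have "\<dots> \<le> m0" using card_mono[OF _ sub] by simp
      finally show ?thesis .
    qed
  qed
  then show ?thesis by blast
qed

lemma four_to_three:
  assumes "finite F" "\<forall>A\<in>F. lacunary A" "S = \<Union>F"
  shows "\<exists>M::nat. \<forall>k. card (S \<inter> blk k) \<le> M"
proof -
  have "\<forall>A\<in>F. \<exists>c. \<forall>k. card (A \<inter> blk k) \<le> c" using assms(2) lac_bound by blast
  then obtain c where c: "\<And>A k. A \<in> F \<Longrightarrow> card (A \<inter> blk k) \<le> c A" by metis
  have "card (S \<inter> blk k) \<le> (\<Sum>A\<in>F. c A)" for k
  proof -
    have eq: "S \<inter> blk k = (\<Union>A\<in>F. A \<inter> blk k)" using assms(3) by auto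
    have "card (S \<inter> blk k) \<le> (\<Sum>A\<in>F. card (A \<inter> blk k))"
      unfolding eq by (rule card_UN_le[OF assms(1)])
    also have "\<dots> \<le> (\<Sum>A\<in>F. c A)" by (rule sum_mono) (rule c)
    finally show ?thesis .
  qed
  then show ?thesis by blast
qed

lemma three_to_four:
  assumes M: "\<forall>k. card (S \<inter> blk k) \<le> M"
  shows "\<exists>F. finite F \<and> (\<forall>A\<in>F. lacunary A) \<and> S = \<Union>F"
proof (cases "finite S")
  case True
  then show ?thesis by (intro exI[of _ "{S}"]) (auto simp: lacunary_def)
next
  case False
  define e where "e = enumerate S"
  define P where "P = 2*M+1"
  have P0: "P > 0" unfolding P_def by simp
  have sm: "strict_mono e" unfolding e_def using False by (simp add: strict_mono_enumerate)
  have eS: "e i \<in> S" for i unfolding e_def using False by (simp add: enumerate_in_set)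
  have rng: "range e = S" unfolding e_def using False by (simp add: range_enumerate)
  have jump: "2 * e j < e (j + P)" for j
  proof (cases "e j = 0")
    case True
    have "e j < e (j+P)" using sm P0 by (simp add: strict_mono_less)
    then show ?thesis using True by simp
  next
    case False
    then have "e j \<ge> 1" by simp
    then obtain k where k: "e j \<in> blk k" using in_some_blk by blast
    show ?thesis
    proof (rule ccontr)
      assume "\<not> 2 * e j < e (j + P)"
      then have up: "e (j+P) \<le> 2 * e j" by simp
      have "e ` {j..j+P} \<subseteq> S \<inter> {e j..2 * e j}"
      proof
        fix y assume "y \<in> e ` {j..j+P}"
        then obtain l where l: "y = e l" "j \<le> l" "l \<le> j+P" by auto
        have "e j \<le> e l" using l sm by (simp add: strict_mono_less_eq)
        moreover have "e l \<le> e (j+P)" using l sm by (simp add: strict_mono_less_eq)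
        ultimately show "y \<in> S \<inter> {e j..2 * e j}" using l up eS by auto
      qed
      then have "card (e ` {j..j+P}) \<le> card (S \<inter> {e j..2 * e j})" by (intro card_mono) auto
      also have "\<dots> \<le> 2*M" using card_blk2[OF M \<open>e j \<ge> 1\<close>] .
      finally have "card (e ` {j..j+P}) \<le> 2*M" .
      moreover have "inj_on e {j..j+P}" using sm by (simp add: strict_mono_imp_inj_on inj_on_subset)
      then have "card (e ` {j..j+P}) = P + 1" by (simp add: card_image)
      ultimately show False unfolding P_def by simp
    qed
  qed
  define F where "F = (\<lambda>r. range (\<lambda>i. e (r + P*i))) ` {..<P}"
  have lac: "lacunary (range (\<lambda>i. e (r + P*i)))" for r
  proof -
    have sm2: "strict_mono (\<lambda>i. e (r + P*i))"
    proof (rule strict_monoI)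
      fix x y :: nat assume "x < y"
      then have "r + P*x < r + P*y" using P0 by simp
      then show "e (r + P*x) < e (r + P*y)" using sm by (simp add: strict_mono_less)
    qed
    have "\<forall>i. real (enumerate (range (\<lambda>i. e (r + P*i))) (Suc i)) >
             2 * real (enumerate (range (\<lambda>i. e (r + P*i))) i)"
    proof
      fix i
      have "2 * e (r + P*i) < e (r + P*i + P)" by (rule jump)
      moreover have "r + P*i + P = r + P * Suc i" by simp
      ultimately have "2 * e (r + P*i) < e (r + P * Suc i)" by simp
      then have "2 * real (e (r + P*i)) < real (e (r + P * Suc i))" by linarith
      then show "real (enumerate (range (\<lambda>i. e (r + P*i))) (Suc i)) >
             2 * real (enumerate (range (\<lambda>i. e (r + P*i))) i)"
        unfolding enum_range_strict_mono[OF sm2] .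
    qed
    then show ?thesis unfolding lacunary_def by (intro disjI2 exI[of _ 2]) auto
  qed
  have "S = \<Union>F"
  proof
    show "S \<subseteq> \<Union>F"
    proof
      fix y assume "y \<in> S"
      then obtain j where j: "y = e j" using rng by auto
      have jj: "j = j mod P + P * (j div P)" by simp
      have jm: "j mod P < P" using P0 by simp
      have "y \<in> range (\<lambda>i. e (j mod P + P*i))" unfolding j by (subst jj) (rule rangeI)
      then show "y \<in> \<Union>F" unfolding F_def using jm by blast
    qed
    show "\<Union>F \<subseteq> S" unfolding F_def using eS by auto
  qed
  moreover have "finite F" unfolding F_def by simp
  moreover have "\<forall>A\<in>F. lacunary A" unfolding F_def using lac by blast
  ultimately show ?thesis by blast
qed

lemma three_to_two:
  assumes M: "\<forall>k. card (S \<inter> blk k) \<le> M"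
  shows "\<exists>R C. hankel_pattern S = R \<union> C \<and> row_finite R \<and> column_finite C"
proof -
  define R where "R = {(i,j). i + j \<in> S \<and> j \<le> i}"
  define C where "C = {(i,j). i + j \<in> S \<and> i < j}"
  have "hankel_pattern S = R \<union> C" unfolding hankel_pattern_def R_def C_def by auto
  moreover have "row_finite R" unfolding row_finite_def
  proof (intro exI[of _ "2*M+1"] allI conjI)
    fix i
    have eq: "{j. (i, j) \<in> R} = {j. j \<le> i \<and> i + j \<in> S}" unfolding R_def by auto
    show fin: "finite {j. (i, j) \<in> R}" unfolding eq by (rule finite_subset[of _ "{..i}"]) auto
    show "card {j. (i, j) \<in> R} \<le> 2*M+1"
    proof (cases "i = 0")
      case True
      have "{j. (i, j) \<in> R} \<subseteq> {0}" unfolding eq using True by auto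
      then have "card {j. (i, j) \<in> R} \<le> card {0::nat}" by (intro card_mono) auto
      then show ?thesis by simp
    next
      case False
      have "card {j. (i, j) \<in> R} = card ((\<lambda>j. i + j) ` {j. (i, j) \<in> R})"
        by (rule card_image[symmetric]) (simp add: inj_on_def)
      also have "\<dots> \<le> card (S \<inter> {i..2*i})"
        by (rule card_mono) (auto simp: eq)
      also have "\<dots> \<le> 2*M" using card_blk2[OF M] False by simp
      finally show ?thesis by simp
    qed
  qed
  moreover have "column_finite C" unfolding column_finite_def
  proof (intro exI[of _ "2*M"] allI conjI)
    fix j
    have eq: "{i. (i, j) \<in> C} = {i. i < j \<and> i + j \<in> S}" unfolding C_def by auto
    show fin: "finite {i. (i, j) \<in> C}" unfolding eq by (rule finite_subset[of _ "{..<j}"]) auto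
    show "card {i. (i, j) \<in> C} \<le> 2*M"
    proof (cases "j = 0")
      case True
      have "{i. (i, j) \<in> C} = {}" unfolding eq using True by auto
      then show ?thesis by simp
    next
      case False
      have "card {i. (i, j) \<in> C} = card ((\<lambda>i. i + j) ` {i. (i, j) \<in> C})"
        by (rule card_image[symmetric]) (simp add: inj_on_def)
      also have "\<dots> \<le> card (S \<inter> {j..2*j})"
        by (rule card_mono) (auto simp: eq)
      also have "\<dots> \<le> 2*M" using card_blk2[OF M] False by simp
      finally show ?thesis .
    qed
  qed
  ultimately show ?thesis by blast
qed

lemma two_to_three:
  assumes H: "hankel_pattern S = R \<union> C" and rf: "row_finite R" and cf: "column_finite C"
  shows "\<exists>M::nat. \<forall>k. card (S \<inter> blk k) \<le> M"
proof -
  obtain a where a: "\<And>i. finite {j. (i, j) \<in> R} \<and> card {j. (i, j) \<in> R} \<le> a"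
    using rf unfolding row_finite_def by blast
  obtain b where b: "\<And>j. finite {i. (i, j) \<in> C} \<and> card {i. (i, j) \<in> C} \<le> b"
    using cf unfolding column_finite_def by blast
  have "card (S \<inter> blk k) \<le> 2*(a+b)" for k
  proof -
    define D where "D = S \<inter> blk k"
    define Q where "Q = {(i,j). i + j \<in> D}"
    define m :: nat where "m = 2^k"
    have finD: "finite D" unfolding D_def by simp
    have Dm: "n \<in> D \<Longrightarrow> m < 2*n \<and> n \<le> m" for n unfolding D_def blk_def m_def by auto
    have QH: "Q \<subseteq> R \<union> C" unfolding Q_def D_def using H unfolding hankel_pattern_def by auto
    have inj: "inj_on (\<lambda>(n,i). (i, n - i)) (Sigma D (\<lambda>n. {..n}))"
      by (auto simp: inj_on_def)
    have img: "(\<lambda>(n,i). (i, n - i)) ` (Sigma D (\<lambda>n. {..n})) \<subseteq> Q"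
      unfolding Q_def by auto
    have QR: "Q \<inter> R \<subseteq> Sigma {..m} (\<lambda>i. {j. (i, j) \<in> R})"
    proof
      fix p assume "p \<in> Q \<inter> R"
      then obtain i j where p: "p = (i,j)" "i + j \<in> D" "(i,j) \<in> R" unfolding Q_def by auto
      then have "i \<le> m" using Dm by fastforce
      then show "p \<in> Sigma {..m} (\<lambda>i. {j. (i, j) \<in> R})" using p by auto
    qed
    have QC: "Q \<inter> C \<subseteq> (\<lambda>(j,i). (i,j)) ` Sigma {..m} (\<lambda>j. {i. (i, j) \<in> C})"
    proof
      fix p assume "p \<in> Q \<inter> C"
      then obtain i j where p: "p = (i,j)" "i + j \<in> D" "(i,j) \<in> C" unfolding Q_def by auto
      then have "j \<le> m" using Dm by fastforce
      then show "p \<in> (\<lambda>(j,i). (i,j)) ` Sigma {..m} (\<lambda>j. {i. (i, j) \<in> C})"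
        using p by (auto intro!: image_eqI[of _ _ "(j,i)"])
    qed
    have c1: "card (Q \<inter> R) \<le> (m+1) * a"
    proof -
      have "card (Q \<inter> R) \<le> card (Sigma {..m} (\<lambda>i. {j. (i, j) \<in> R}))"
        by (rule card_mono[OF _ QR]) (use a in auto)
      also have "\<dots> = (\<Sum>i\<le>m. card {j. (i, j) \<in> R})" by (rule card_SigmaI) (use a in auto)
      also have "\<dots> \<le> (\<Sum>i\<le>m. a)" by (rule sum_mono) (use a in auto)
      finally show ?thesis by simp
    qed
    have c2: "card (Q \<inter> C) \<le> (m+1) * b"
    proof -
      have "card (Q \<inter> C) \<le> card ((\<lambda>(j,i). (i,j)) ` Sigma {..m} (\<lambda>j. {i. (i, j) \<in> C}))"
        by (rule card_mono[OF _ QC]) (use b in auto)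
      also have "\<dots> \<le> card (Sigma {..m} (\<lambda>j. {i. (i, j) \<in> C}))" by (rule card_image_le) (use b in auto)
      also have "\<dots> = (\<Sum>j\<le>m. card {i. (i, j) \<in> C})" by (rule card_SigmaI) (use b in auto)
      also have "\<dots> \<le> (\<Sum>j\<le>m. b)" by (rule sum_mono) (use b in auto)
      finally show ?thesis by simp
    qed
    have finQ: "finite Q"
    proof (rule finite_subset)
      show "Q \<subseteq> {..m} \<times> {..m}" unfolding Q_def using Dm by fastforce
    qed auto
    have "card Q \<le> card (Q \<inter> R) + card (Q \<inter> C)"
    proof -
      have "Q = (Q \<inter> R) \<union> (Q \<inter> C)" using QH by auto
      then have "card Q = card ((Q \<inter> R) \<union> (Q \<inter> C))" by simp
      also have "\<dots> \<le> card (Q \<inter> R) + card (Q \<inter> C)" by (rule card_Un_le)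
      finally show ?thesis .
    qed
    moreover have "(\<Sum>n\<in>D. n + 1) \<le> card Q"
    proof -
      have "(\<Sum>n\<in>D. n + 1) = card (Sigma D (\<lambda>n. {..n}))" by (simp add: card_SigmaI finD)
      also have "\<dots> = card ((\<lambda>(n,i). (i, n - i)) ` (Sigma D (\<lambda>n. {..n})))"
        by (rule card_image[symmetric, OF inj])
      also have "\<dots> \<le> card Q" by (rule card_mono[OF finQ img])
      finally show ?thesis .
    qed
    moreover have "card D * (m+1) \<le> 2 * (\<Sum>n\<in>D. n + 1)"
    proof -
      have "card D * (m+1) = (\<Sum>n\<in>D. m + 1)" by simp
      also have "\<dots> \<le> (\<Sum>n\<in>D. 2 * (n + 1))" by (rule sum_mono) (use Dm in fastforce)
      also have "\<dots> = 2 * (\<Sum>n\<in>D. n + 1)" by (simp add: sum_distrib_left)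
      finally show ?thesis .
    qed
    ultimately have "card D * (m+1) \<le> 2 * ((m+1)*a + (m+1)*b)" using c1 c2
      by (meson add_mono le_trans mult_le_mono2)
    then have "card D * (m+1) \<le> (2*(a+b)) * (m+1)" by (simp add: algebra_simps)
    then have "card D \<le> 2*(a+b)" using mult_le_cancel2[of "card D" "m+1" "2*(a+b)"] by simp
    then show ?thesis unfolding D_def .
  qed
  then show ?thesis by blast
qed

lemma mb_nonneg: "matrix_bound T c \<Longrightarrow> c \<ge> 0"
  unfolding matrix_bound_def by (erule allE[of _ 0]) (auto)

lemma mb_transpose: fixes T :: "nat \<Rightarrow> nat \<Rightarrow> complex" shows "matrix_bound T c \<Longrightarrow> matrix_bound (\<lambda>i j. T j i) c"
  unfolding matrix_bound_def
proof (intro allI impI)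
  fix n :: nat and x y :: "nat \<Rightarrow> complex"
  assume H: "\<forall>n x y. (\<Sum>j<n. (cmod (x j))\<^sup>2) \<le> 1 \<longrightarrow> (\<Sum>i<n. (cmod (y i))\<^sup>2) \<le> 1 \<longrightarrow>
        cmod (\<Sum>i<n. \<Sum>j<n. y i * T i j * x j) \<le> c"
    and x: "(\<Sum>j<n. (cmod (x j))\<^sup>2) \<le> 1" and y: "(\<Sum>i<n. (cmod (y i))\<^sup>2) \<le> 1"
  have "(\<Sum>i<n. \<Sum>j<n. y i * T j i * x j) = (\<Sum>j<n. \<Sum>i<n. x j * T j i * y i)"
    by (subst sum.swap) (simp add: mult_ac)
  then show "cmod (\<Sum>i<n. \<Sum>j<n. y i * T j i * x j) \<le> c" using H x y by simp
qed

lemma mb_col: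
  assumes mb: "matrix_bound T c" and jn: "j < n"
  shows "(\<Sum>i<n. (cmod (T i j))\<^sup>2) \<le> c\<^sup>2"
proof -
  define \<rho> where "\<rho> = sqrt (\<Sum>i<n. (cmod (T i j))\<^sup>2)"
  have c0: "c \<ge> 0" using mb_nonneg[OF mb] .
  have \<rho>0: "\<rho> \<ge> 0" unfolding \<rho>_def by (rule real_sqrt_ge_zero) (rule sum_nonneg, simp)
  have sq: "\<rho>\<^sup>2 = (\<Sum>i<n. (cmod (T i j))\<^sup>2)" unfolding \<rho>_def
    by (rule real_sqrt_pow2) (rule sum_nonneg, simp)
  show ?thesis
  proof (cases "\<rho> = 0")
    case True then show ?thesis using sq by simp
  next
    case False
    then have \<rho>p: "\<rho> > 0" using \<rho>0 by simp
    define x :: "nat \<Rightarrow> complex" where "x l = (if l = j then 1 else 0)" for l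
    define y :: "nat \<Rightarrow> complex" where "y i = cnj (T i j) / complex_of_real \<rho>" for i
    have xl: "(cmod (x l))\<^sup>2 = (if l = j then 1 else 0)" for l by (simp add: x_def)
    have xn: "(\<Sum>l<n. (cmod (x l))\<^sup>2) \<le> 1" using jn by (simp add: xl)
    have "(\<Sum>i<n. (cmod (y i))\<^sup>2) = (\<Sum>i<n. (cmod (T i j))\<^sup>2) / \<rho>\<^sup>2"
      unfolding y_def by (simp add: norm_divide power_divide sum_divide_distrib)
    also have "\<dots> = 1" unfolding sq[symmetric] using \<rho>p by simp
    finally have yn: "(\<Sum>i<n. (cmod (y i))\<^sup>2) \<le> 1" by simp
    have xs: "(\<Sum>l<n. y i * T i l * x l) = y i * T i j" for i
    proof -
      have "(\<Sum>l<n. y i * T i l * x l) = (\<Sum>l<n. if l = j then y i * T i j else 0)"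
        by (rule sum.cong) (auto simp: x_def)
      also have "\<dots> = y i * T i j" using jn by simp
      finally show ?thesis .
    qed
    have yT: "y i * T i j = complex_of_real ((cmod (T i j))\<^sup>2) / complex_of_real \<rho>" for i
    proof -
      have e1: "y i * T i j = (T i j * cnj (T i j)) / complex_of_real \<rho>" by (simp add: y_def mult.commute)
      have e2: "T i j * cnj (T i j) = complex_of_real ((cmod (T i j))\<^sup>2)" by (rule complex_norm_square[symmetric])
      show ?thesis by (simp only: e1 e2)
    qed
    have "(\<Sum>i<n. \<Sum>l<n. y i * T i l * x l) = (\<Sum>i<n. complex_of_real ((cmod (T i j))\<^sup>2) / complex_of_real \<rho>)"
      by (simp only: xs yT)
    also have "\<dots> = (\<Sum>i<n. complex_of_real ((cmod (T i j))\<^sup>2)) / complex_of_real \<rho>"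
      by (rule sum_divide_distrib[symmetric])
    also have "\<dots> = complex_of_real (\<rho>\<^sup>2) / complex_of_real \<rho>"
      by (simp only: sq of_real_sum)
    also have "\<dots> = complex_of_real \<rho>"
      using \<rho>p by (simp add: power2_eq_square)
    finally have "cmod (\<Sum>i<n. \<Sum>l<n. y i * T i l * x l) = \<rho>" using \<rho>0 by simp
    moreover have "cmod (\<Sum>i<n. \<Sum>l<n. y i * T i l * x l) \<le> c"
      using mb xn yn unfolding matrix_bound_def by blast
    ultimately have "\<rho> \<le> c" by simp
    then have "\<rho>\<^sup>2 \<le> c\<^sup>2" using \<rho>0 by (simp add: power_mono)
    then show ?thesis using sq by simp
  qed
qed

lemma rowfinite_bound:
  assumes P: "\<And>i. finite {j. (i, j) \<in> P} \<and> card {j. (i, j) \<in> P} \<le> k"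
    and s0: "\<And>i j. (i, j) \<notin> P \<Longrightarrow> s i j = 0" and s1: "\<And>i j. cmod (s i j) \<le> 1"
    and mb: "matrix_bound T c"
    and x: "(\<Sum>j<n. (cmod (x j))\<^sup>2) \<le> 1" and y: "(\<Sum>i<n. (cmod (y i))\<^sup>2) \<le> 1"
  shows "cmod (\<Sum>i<n. \<Sum>j<n. y i * (s i j * T i j) * x j) \<le> sqrt k * c"
proof -
  define I where "I = {..<n} \<times> {..<n}"
  define a where "a p = (if p \<in> P then cmod (y (fst p)) else 0)" for p
  define b where "b p = cmod (T (fst p) (snd p)) * cmod (x (snd p))" for p
  have c0: "c \<ge> 0" using mb_nonneg[OF mb] .
  have "cmod (\<Sum>i<n. \<Sum>j<n. y i * (s i j * T i j) * x j) \<le> (\<Sum>i<n. \<Sum>j<n. cmod (y i * (s i j * T i j) * x j))"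
    by (rule order_trans[OF norm_sum sum_mono]) (rule norm_sum)
  also have "\<dots> \<le> (\<Sum>i<n. \<Sum>j<n. a (i,j) * b (i,j))"
  proof (intro sum_mono)
    fix i j
    show "cmod (y i * (s i j * T i j) * x j) \<le> a (i,j) * b (i,j)"
    proof (cases "(i,j) \<in> P")
      case True
      have "cmod (y i * (s i j * T i j) * x j) = cmod (y i) * cmod (s i j) * cmod (T i j) * cmod (x j)"
        by (simp add: norm_mult)
      also have "\<dots> \<le> cmod (y i) * 1 * cmod (T i j) * cmod (x j)"
        using s1[of i j] by (intro mult_right_mono mult_left_mono) auto
      finally show ?thesis using True unfolding a_def b_def by simp
    qed (simp add: s0 a_def)
  qed
  also have "\<dots> = (\<Sum>p\<in>I. a p * b p)" unfolding I_def by (simp add: sum.cartesian_product)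
  finally have L: "cmod (\<Sum>i<n. \<Sum>j<n. y i * (s i j * T i j) * x j) \<le> (\<Sum>p\<in>I. a p * b p)" .
  have CS: "(\<Sum>p\<in>I. a p * b p)\<^sup>2 \<le> (\<Sum>p\<in>I. (a p)\<^sup>2) * (\<Sum>p\<in>I. (b p)\<^sup>2)"
    by (rule Cauchy_Schwarz_ineq_sum)
  have A: "(\<Sum>p\<in>I. (a p)\<^sup>2) \<le> k"
  proof -
    have "(\<Sum>p\<in>I. (a p)\<^sup>2) = (\<Sum>i<n. \<Sum>j<n. (a (i,j))\<^sup>2)" unfolding I_def by (simp add: sum.cartesian_product)
    also have "\<dots> = (\<Sum>i<n. (cmod (y i))\<^sup>2 * real (card {j\<in>{..<n}. (i,j) \<in> P}))"
    proof (rule sum.cong[OF refl])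
      fix i
      have "(\<Sum>j<n. (a (i,j))\<^sup>2) = (\<Sum>j<n. if (i,j) \<in> P then (cmod (y i))\<^sup>2 else 0)"
        unfolding a_def by (rule sum.cong) auto
      also have "\<dots> = (\<Sum>j\<in>{j\<in>{..<n}. (i,j) \<in> P}. (cmod (y i))\<^sup>2)"
        by (rule sum.inter_filter[symmetric]) simp
      finally have "(\<Sum>j<n. (a (i,j))\<^sup>2) = (\<Sum>j\<in>{j\<in>{..<n}. (i,j) \<in> P}. (cmod (y i))\<^sup>2)" .
      then show "(\<Sum>j<n. (a (i,j))\<^sup>2) = (cmod (y i))\<^sup>2 * real (card {j\<in>{..<n}. (i,j) \<in> P})" by simp
    qed
    also have "\<dots> \<le> (\<Sum>i<n. (cmod (y i))\<^sup>2 * real k)"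
    proof (rule sum_mono)
      fix i
      have "card {j\<in>{..<n}. (i,j) \<in> P} \<le> card {j. (i,j) \<in> P}" using P[of i] by (intro card_mono) auto
      then have "card {j\<in>{..<n}. (i,j) \<in> P} \<le> k" using P[of i] by linarith
      then show "(cmod (y i))\<^sup>2 * real (card {j\<in>{..<n}. (i,j) \<in> P}) \<le> (cmod (y i))\<^sup>2 * real k"
        by (intro mult_left_mono) auto
    qed
    also have "\<dots> = (\<Sum>i<n. (cmod (y i))\<^sup>2) * real k" by (simp add: sum_distrib_right)
    also have "\<dots> \<le> k" using y by (intro mult_left_le_one_le) (auto intro: sum_nonneg)
    finally show ?thesis .
  qed
  have B: "(\<Sum>p\<in>I. (b p)\<^sup>2) \<le> c\<^sup>2"
  proof -
    have "(\<Sum>p\<in>I. (b p)\<^sup>2) = (\<Sum>i<n. \<Sum>j<n. (b (i,j))\<^sup>2)" unfolding I_def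
      by (simp add: sum.cartesian_product)
    also have "\<dots> = (\<Sum>j<n. \<Sum>i<n. (b (i,j))\<^sup>2)" by (rule sum.swap)
    also have "\<dots> = (\<Sum>j<n. (cmod (x j))\<^sup>2 * (\<Sum>i<n. (cmod (T i j))\<^sup>2))"
      unfolding b_def by (simp add: power_mult_distrib sum_distrib_left mult.commute)
    also have "\<dots> \<le> (\<Sum>j<n. (cmod (x j))\<^sup>2 * c\<^sup>2)"
      by (rule sum_mono) (intro mult_left_mono mb_col[OF mb]; simp)
    also have "\<dots> = (\<Sum>j<n. (cmod (x j))\<^sup>2) * c\<^sup>2" by (simp add: sum_distrib_right)
    also have "\<dots> \<le> c\<^sup>2" using x by (intro mult_left_le_one_le) (auto intro: sum_nonneg)
    finally show ?thesis .
  qed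
  have "(\<Sum>p\<in>I. a p * b p)\<^sup>2 \<le> real k * c\<^sup>2"
    using CS A B by (meson order_trans mult_mono sum_nonneg zero_le_power2 of_nat_0_le_iff)
  then have "(\<Sum>p\<in>I. a p * b p) \<le> sqrt (real k * c\<^sup>2)" by (simp add: real_le_rsqrt)
  also have "\<dots> = sqrt k * c" using c0 by (simp add: real_sqrt_mult)
  finally show ?thesis using L by simp
qed

lemma colfinite_bound:
  assumes P: "\<And>j. finite {i. (i, j) \<in> P} \<and> card {i. (i, j) \<in> P} \<le> k"
    and s0: "\<And>i j. (i, j) \<notin> P \<Longrightarrow> s i j = 0" and s1: "\<And>i j. cmod (s i j) \<le> 1"
    and mb: "matrix_bound T c"
    and x: "(\<Sum>j<n. (cmod (x j))\<^sup>2) \<le> 1" and y: "(\<Sum>i<n. (cmod (y i))\<^sup>2) \<le> 1"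
  shows "cmod (\<Sum>i<n. \<Sum>j<n. y i * (s i j * T i j) * x j) \<le> sqrt k * c"
proof -
  define P' where "P' = (\<lambda>(i,j). (j,i)) ` P"
  have P'e: "(i,j) \<in> P' \<longleftrightarrow> (j,i) \<in> P" for i j unfolding P'_def by force
  have "cmod (\<Sum>i<n. \<Sum>j<n. x i * (s j i * T j i) * y j) \<le> sqrt k * c"
    by (rule rowfinite_bound[where P=P' and s="\<lambda>i j::nat. s j i" and T="\<lambda>i j::nat. T j i"])
       (use P s0 s1 x y mb_transpose[OF mb] in \<open>auto simp: P'e\<close>)
  moreover have "(\<Sum>i<n. \<Sum>j<n. x i * (s j i * T j i) * y j) = (\<Sum>i<n. \<Sum>j<n. y i * (s i j * T i j) * x j)"
    by (subst sum.swap) (simp add: mult_ac)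
  ultimately show ?thesis by simp
qed

lemma two_to_one:
  assumes H: "hankel_pattern S = R \<union> C" and rf: "row_finite R" and cf: "column_finite C"
  shows "schur_bounded (hankel_pattern S)"
  unfolding schur_bounded_def
proof (intro allI impI)
  fix s :: "nat \<Rightarrow> nat \<Rightarrow> complex"
  assume s0: "\<forall>i j. (i, j) \<notin> hankel_pattern S \<longrightarrow> s i j = 0" and s1: "\<forall>i j. cmod (s i j) \<le> 1"
  obtain a where a: "\<And>i. finite {j. (i, j) \<in> R} \<and> card {j. (i, j) \<in> R} \<le> a"
    using rf unfolding row_finite_def by blast
  obtain b where b: "\<And>j. finite {i. (i, j) \<in> C} \<and> card {i. (i, j) \<in> C} \<le> b"
    using cf unfolding column_finite_def by blast
  define sR where "sR i j = (if (i,j) \<in> R then s i j else 0)" for i j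
  define sC where "sC i j = (if (i,j) \<in> R then 0 else s i j)" for i j
  show "bounded_schur_multiplier s" unfolding bounded_schur_multiplier_def
  proof (intro exI[of _ "sqrt a + sqrt b"] allI impI)
    fix T c assume mb: "matrix_bound T c"
    have c0: "c \<ge> 0" using mb_nonneg[OF mb] .
    show "matrix_bound (\<lambda>i j. s i j * T i j) ((sqrt a + sqrt b) * c)" unfolding matrix_bound_def
    proof (intro allI impI)
      fix n and x y :: "nat \<Rightarrow> complex"
      assume x: "(\<Sum>j<n. (cmod (x j))\<^sup>2) \<le> 1" and y: "(\<Sum>i<n. (cmod (y i))\<^sup>2) \<le> 1"
      have split: "(\<Sum>i<n. \<Sum>j<n. y i * (s i j * T i j) * x j) =
          (\<Sum>i<n. \<Sum>j<n. y i * (sR i j * T i j) * x j) + (\<Sum>i<n. \<Sum>j<n. y i * (sC i j * T i j) * x j)"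
      proof -
        have pt: "s i j = sR i j + sC i j" for i j by (simp add: sR_def sC_def)
        show ?thesis unfolding pt by (simp add: distrib_left distrib_right sum.distrib)
      qed
      have bR: "cmod (\<Sum>i<n. \<Sum>j<n. y i * (sR i j * T i j) * x j) \<le> sqrt a * c"
        by (rule rowfinite_bound[OF a _ _ mb x y]) (use s1 in \<open>auto simp: sR_def\<close>)
      have bC: "cmod (\<Sum>i<n. \<Sum>j<n. y i * (sC i j * T i j) * x j) \<le> sqrt b * c"
        by (rule colfinite_bound[OF b _ _ mb x y]) (use s0 s1 H in \<open>auto simp: sC_def\<close>)
      have "cmod (\<Sum>i<n. \<Sum>j<n. y i * (s i j * T i j) * x j) \<le> sqrt a * c + sqrt b * c"
        unfolding split by (rule order_trans[OF norm_triangle_ineq add_mono[OF bR bC]])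
      then show "cmod (\<Sum>i<n. \<Sum>j<n. y i * (s i j * T i j) * x j) \<le> (sqrt a + sqrt b) * c"
        by (simp add: algebra_simps)
    qed
  qed
qed

definition om :: "nat \<Rightarrow> nat \<Rightarrow> nat \<Rightarrow> complex" where
  "om M t n = cis (2 * pi * real t * real n / real M)"

lemma om_mult: "om M t a * om M t b = om M t (a + b)"
  unfolding om_def by (simp add: cis_mult add_divide_distrib distrib_left)

lemma om_norm[simp]: "cmod (om M t n) = 1"
  unfolding om_def by simp

lemma om_orth:
  assumes M: "M > 0" and ne: "i \<noteq> i'" and d: "\<bar>real i - real i'\<bar> < real M"
  shows "(\<Sum>t<M. om M t i * cnj (om M t i')) = 0"
proof -
  define d :: real where "d = real i - real i'"
  define w where "w = cis (2 * pi * d / real M)"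
  have tm: "om M t i * cnj (om M t i') = w ^ t" for t
  proof -
    have "om M t i * cnj (om M t i') = cis (2 * pi * real t * real i / real M + - (2 * pi * real t * real i' / real M))"
      by (simp only: om_def cis_cnj cis_mult)
    also have "2 * pi * real t * real i / real M + - (2 * pi * real t * real i' / real M) = real t * (2 * pi * d / real M)"
      unfolding d_def using M by (simp add: field_simps)
    finally have "om M t i * cnj (om M t i') = cis (real t * (2 * pi * d / real M))" .
    moreover have "w ^ t = cis (real t * (2 * pi * d / real M))" unfolding w_def by (rule Complex.DeMoivre)
    ultimately show ?thesis by simp
  qed
  have dint: "d = of_int (int i - int i')" unfolding d_def by simp
  have d0: "d \<noteq> 0" using ne unfolding d_def by simp
  have w1: "w \<noteq> 1"
  proof
    assume "w = 1"
    then have "Re w = 1" by simp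
    then have "cos (2 * pi * d / real M) = 1" unfolding w_def by simp
    then obtain k :: int where k: "2 * pi * d / real M = of_int k * 2 * pi" using cos_one_2pi_int by blast
    then have "d = of_int k * real M" using M by (simp add: field_simps)
    moreover have "k \<noteq> 0" using d0 calculation by auto
    moreover have "\<bar>real_of_int k\<bar> \<ge> 1" using \<open>k \<noteq> 0\<close> by linarith
    ultimately have "\<bar>d\<bar> \<ge> real M"
      using mult_right_mono[of 1 "\<bar>real_of_int k\<bar>" "real M"] by (simp add: abs_mult)
    then show False using d unfolding d_def by simp
  qed
  have wM: "w ^ M = 1"
  proof -
    have "w ^ M = cis (real M * (2 * pi * d / real M))" unfolding w_def by (rule Complex.DeMoivre)
    also have "real M * (2 * pi * d / real M) = 2 * pi * d" using M by simp
    also have "cis (2 * pi * d) = 1" unfolding dint by (rule cis_multiple_2pi) simp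
    finally show ?thesis .
  qed
  have "(\<Sum>t<M. om M t i * cnj (om M t i')) = (\<Sum>t<M. w ^ t)" by (simp add: tm)
  also have "\<dots> = 0" using geometric_sum[OF w1, of M] wM by simp
  finally show ?thesis .
qed

lemma om_self: "om M t i * cnj (om M t i) = 1"
  unfolding om_def by (simp add: cis_cnj cis_mult)

lemma parseval:
  assumes M: "M > 0" and fin: "finite I" and sub: "I \<subseteq> {c..<c+M}"
  shows "(\<Sum>t<M. (cmod (\<Sum>i\<in>I. y i * om M t i))\<^sup>2) = real M * (\<Sum>i\<in>I. (cmod (y i))\<^sup>2)"
proof -
  have key: "(\<Sum>t<M. om M t i * cnj (om M t i')) = (if i = i' then of_nat M else 0)"
    if "i \<in> I" "i' \<in> I" for i i'
  proof (cases "i = i'")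
    case True then show ?thesis by (simp add: om_self)
  next
    case False
    have "c \<le> i" "i < c+M" "c \<le> i'" "i' < c+M" using that sub by auto
    then have "\<bar>real i - real i'\<bar> < real M" unfolding abs_less_iff by linarith
    then show ?thesis using om_orth[OF M False] False by simp
  qed
  have "complex_of_real (\<Sum>t<M. (cmod (\<Sum>i\<in>I. y i * om M t i))\<^sup>2)
      = (\<Sum>t<M. (\<Sum>i\<in>I. y i * om M t i) * cnj (\<Sum>i\<in>I. y i * om M t i))"
    by (simp only: of_real_sum complex_norm_square)
  also have "\<dots> = (\<Sum>t<M. \<Sum>i'\<in>I. \<Sum>i\<in>I. y i * cnj (y i') * (om M t i * cnj (om M t i')))"
    by (simp add: sum_distrib_left sum_distrib_right mult_ac)
  also have "\<dots> = (\<Sum>i'\<in>I. \<Sum>t<M. \<Sum>i\<in>I. y i * cnj (y i') * (om M t i * cnj (om M t i')))"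
    by (rule sum.swap[of "\<lambda>t i'. \<Sum>i\<in>I. y i * cnj (y i') * (om M t i * cnj (om M t i'))" I "{..<M}"])
  also have "\<dots> = (\<Sum>i'\<in>I. \<Sum>i\<in>I. \<Sum>t<M. y i * cnj (y i') * (om M t i * cnj (om M t i')))"
    by (rule sum.cong[OF refl]) (rule sum.swap)
  also have "\<dots> = (\<Sum>i'\<in>I. \<Sum>i\<in>I. y i * cnj (y i') * (\<Sum>t<M. om M t i * cnj (om M t i')))"
    by (simp add: sum_distrib_left)
  also have "\<dots> = (\<Sum>i\<in>I. \<Sum>i'\<in>I. y i * cnj (y i') * (\<Sum>t<M. om M t i * cnj (om M t i')))"
    by (rule sum.swap)
  also have "\<dots> = (\<Sum>i\<in>I. \<Sum>i'\<in>I. y i * cnj (y i') * (if i = i' then of_nat M else 0))"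
    by (intro sum.cong refl) (simp add: key)
  also have "\<dots> = (\<Sum>i\<in>I. y i * cnj (y i) * of_nat M)"
    using fin by (simp add: if_distrib[of "\<lambda>z. _ * z"] sum.delta cong: if_cong)
  also have "\<dots> = (\<Sum>i\<in>I. complex_of_real (real M * (cmod (y i))\<^sup>2))"
  proof (rule sum.cong[OF refl])
    fix i
    have "y i * cnj (y i) = complex_of_real ((cmod (y i))\<^sup>2)" by (rule complex_norm_square[symmetric])
    then show "y i * cnj (y i) * of_nat M = complex_of_real (real M * (cmod (y i))\<^sup>2)"
      by (simp only: of_real_mult of_real_of_nat_eq mult.commute)
  qed
  also have "\<dots> = complex_of_real (real M * (\<Sum>i\<in>I. (cmod (y i))\<^sup>2))"
    by (simp only: of_real_sum sum_distrib_left)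
  finally show ?thesis by (simp only: of_real_eq_iff)
qed

lemma sum_if_restrict:
  assumes "finite I" "finite J"
  shows "(\<Sum>i\<in>I. \<Sum>j\<in>J. if i \<in> R \<and> j \<in> C then g i j else 0) = (\<Sum>i\<in>I \<inter> R. \<Sum>j\<in>J \<inter> C. g i j)"
proof -
  have "(\<Sum>i\<in>I. \<Sum>j\<in>J. if i \<in> R \<and> j \<in> C then g i j else 0)
      = (\<Sum>i\<in>I. if i \<in> R then (\<Sum>j\<in>J. if j \<in> C then g i j else 0) else 0)"
    by (rule sum.cong[OF refl]) auto
  also have "\<dots> = (\<Sum>i\<in>I \<inter> R. \<Sum>j\<in>J. if j \<in> C then g i j else 0)"
    using assms by (simp add: sum.inter_restrict)
  also have "\<dots> = (\<Sum>i\<in>I \<inter> R. \<Sum>j\<in>J \<inter> C. g i j)"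
    using assms by (simp add: sum.inter_restrict)
  finally show ?thesis .
qed

lemma sum_le_sqrt:
  fixes a b :: "'a \<Rightarrow> real"
  assumes "\<And>i. i \<in> I \<Longrightarrow> a i \<ge> 0" "\<And>i. i \<in> I \<Longrightarrow> b i \<ge> 0"
  shows "(\<Sum>i\<in>I. a i * b i) \<le> sqrt (\<Sum>i\<in>I. (a i)\<^sup>2) * sqrt (\<Sum>i\<in>I. (b i)\<^sup>2)"
proof -
  have "(\<Sum>i\<in>I. a i * b i)\<^sup>2 \<le> (\<Sum>i\<in>I. (a i)\<^sup>2) * (\<Sum>i\<in>I. (b i)\<^sup>2)" by (rule Cauchy_Schwarz_ineq_sum)
  then have "(\<Sum>i\<in>I. a i * b i) \<le> sqrt ((\<Sum>i\<in>I. (a i)\<^sup>2) * (\<Sum>i\<in>I. (b i)\<^sup>2))" by (rule real_le_rsqrt)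
  then show ?thesis by (simp add: real_sqrt_mult)
qed

lemma tm_bound:
  fixes c :: "nat \<Rightarrow> complex"
  assumes M: "M > 0" and Rf: "finite Rw" and Rs: "Rw \<subseteq> {a..<a+M}"
    and Cf: "finite Cw" and Cs: "Cw \<subseteq> {b..<b+M}" and cb: "\<And>t. cmod (c t) \<le> 1 / real M"
  shows "matrix_bound (\<lambda>i j. if i \<in> Rw \<and> j \<in> Cw then \<Sum>t<M. c t * om M t i * om M t j else 0) 1"
  unfolding matrix_bound_def
proof (intro allI impI)
  fix n :: nat and x y :: "nat \<Rightarrow> complex"
  assume x: "(\<Sum>j<n. (cmod (x j))\<^sup>2) \<le> 1" and y: "(\<Sum>i<n. (cmod (y i))\<^sup>2) \<le> 1"
  define I where "I = {..<n} \<inter> Rw"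
  define J where "J = {..<n} \<inter> Cw"
  have If: "finite I" "I \<subseteq> {a..<a+M}" unfolding I_def using Rs by auto
  have Jf: "finite J" "J \<subseteq> {b..<b+M}" unfolding J_def using Cs by auto
  define Y where "Y t = (\<Sum>i\<in>I. y i * om M t i)" for t
  define X where "X t = (\<Sum>j\<in>J. x j * om M t j)" for t
  have "(\<Sum>i<n. \<Sum>j<n. y i * (if i \<in> Rw \<and> j \<in> Cw then \<Sum>t<M. c t * om M t i * om M t j else 0) * x j)
      = (\<Sum>i<n. \<Sum>j<n. if i \<in> Rw \<and> j \<in> Cw then y i * (\<Sum>t<M. c t * om M t i * om M t j) * x j else 0)"
    by (intro sum.cong refl) auto
  also have "\<dots> = (\<Sum>i\<in>I. \<Sum>j\<in>J. y i * (\<Sum>t<M. c t * om M t i * om M t j) * x j)"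
    unfolding I_def J_def by (rule sum_if_restrict) auto
  also have "\<dots> = (\<Sum>i\<in>I. \<Sum>j\<in>J. \<Sum>t<M. c t * (y i * om M t i) * (x j * om M t j))"
    by (simp add: sum_distrib_left sum_distrib_right mult_ac)
  also have "\<dots> = (\<Sum>i\<in>I. \<Sum>t<M. \<Sum>j\<in>J. c t * (y i * om M t i) * (x j * om M t j))"
    by (rule sum.cong[OF refl]) (rule sum.swap)
  also have "\<dots> = (\<Sum>t<M. \<Sum>i\<in>I. \<Sum>j\<in>J. c t * (y i * om M t i) * (x j * om M t j))"
    by (rule sum.swap)
  also have "\<dots> = (\<Sum>t<M. c t * Y t * X t)"
    unfolding X_def Y_def by (simp add: sum_distrib_left sum_distrib_right mult_ac)
  finally have eq: "(\<Sum>i<n. \<Sum>j<n. y i * (if i \<in> Rw \<and> j \<in> Cw then \<Sum>t<M. c t * om M t i * om M t j else 0) * x j)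
      = (\<Sum>t<M. c t * Y t * X t)" .
  have "cmod (\<Sum>t<M. c t * Y t * X t) \<le> (\<Sum>t<M. cmod (c t * Y t * X t))" by (rule norm_sum)
  also have "\<dots> \<le> (\<Sum>t<M. (1 / real M) * (cmod (Y t) * cmod (X t)))"
  proof (rule sum_mono)
    fix t
    have "cmod (c t * Y t * X t) = cmod (c t) * (cmod (Y t) * cmod (X t))" by (simp add: norm_mult)
    also have "\<dots> \<le> (1 / real M) * (cmod (Y t) * cmod (X t))" by (rule mult_right_mono[OF cb]) simp
    finally show "cmod (c t * Y t * X t) \<le> (1 / real M) * (cmod (Y t) * cmod (X t))" .
  qed
  also have "\<dots> = (1 / real M) * (\<Sum>t<M. cmod (Y t) * cmod (X t))" by (simp add: sum_distrib_left)
  also have "\<dots> \<le> (1 / real M) * (sqrt (\<Sum>t<M. (cmod (Y t))\<^sup>2) * sqrt (\<Sum>t<M. (cmod (X t))\<^sup>2))"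
    by (intro mult_left_mono sum_le_sqrt) auto
  also have "\<dots> \<le> (1 / real M) * (sqrt (real M) * sqrt (real M))"
  proof -
    have "(\<Sum>t<M. (cmod (Y t))\<^sup>2) = real M * (\<Sum>i\<in>I. (cmod (y i))\<^sup>2)"
      unfolding Y_def by (rule parseval[OF M If])
    also have "\<dots> \<le> real M * 1"
    proof (rule mult_left_mono)
      have "(\<Sum>i\<in>I. (cmod (y i))\<^sup>2) \<le> (\<Sum>i<n. (cmod (y i))\<^sup>2)"
        unfolding I_def by (rule sum_mono2) auto
      then show "(\<Sum>i\<in>I. (cmod (y i))\<^sup>2) \<le> 1" using y by linarith
    qed simp
    finally have Y1: "(\<Sum>t<M. (cmod (Y t))\<^sup>2) \<le> real M" by simp
    have "(\<Sum>t<M. (cmod (X t))\<^sup>2) = real M * (\<Sum>j\<in>J. (cmod (x j))\<^sup>2)"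
      unfolding X_def by (rule parseval[OF M Jf])
    also have "\<dots> \<le> real M * 1"
    proof (rule mult_left_mono)
      have "(\<Sum>j\<in>J. (cmod (x j))\<^sup>2) \<le> (\<Sum>j<n. (cmod (x j))\<^sup>2)"
        unfolding J_def by (rule sum_mono2) auto
      then show "(\<Sum>j\<in>J. (cmod (x j))\<^sup>2) \<le> 1" using x by linarith
    qed simp
    finally have X1: "(\<Sum>t<M. (cmod (X t))\<^sup>2) \<le> real M" by simp
    show ?thesis using Y1 X1 by (intro mult_left_mono mult_mono) (auto intro: sum_nonneg)
  qed
  also have "\<dots> = 1" using M by simp
  finally show "cmod (\<Sum>i<n. \<Sum>j<n. y i * (if i \<in> Rw \<and> j \<in> Cw then \<Sum>t<M. c t * om M t i * om M t j else 0) * x j) \<le> 1"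
    unfolding eq .
qed

definition sg :: "nat set \<Rightarrow> nat \<Rightarrow> complex" where
  "sg A n = (if n \<in> A then 1 else -1)"

definition XX :: "nat set \<Rightarrow> nat set \<Rightarrow> (nat \<Rightarrow> complex) \<Rightarrow> complex" where
  "XX D A b = (\<Sum>n\<in>D. sg A n * b n)"

lemma pow_insert_sum:
  fixes g :: "nat set \<Rightarrow> 'b::comm_monoid_add"
  assumes "finite F" "x \<notin> F"
  shows "(\<Sum>A\<in>Pow (insert x F). g A) = (\<Sum>A\<in>Pow F. g A + g (insert x A))"
proof -
  have disj: "Pow F \<inter> insert x ` Pow F = {}" using assms by auto
  have inj: "inj_on (insert x) (Pow F)"
  proof (rule inj_onI)
    fix A1 A2 assume "A1 \<in> Pow F" "A2 \<in> Pow F" "insert x A1 = insert x A2"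
    then show "A1 = A2" using assms(2) by (metis Diff_insert_absorb PowD subsetD)
  qed
  have "(\<Sum>A\<in>Pow (insert x F). g A) = (\<Sum>A\<in>Pow F. g A) + (\<Sum>A\<in>insert x ` Pow F. g A)"
    unfolding Pow_insert by (rule sum.union_disjoint) (use assms disj in auto)
  also have "(\<Sum>A\<in>insert x ` Pow F. g A) = (\<Sum>A\<in>Pow F. g (insert x A))"
    by (rule sum.reindex[OF inj, unfolded comp_def])
  finally show ?thesis by (simp add: sum.distrib)
qed

lemma XX_insert:
  assumes "finite F" "x \<notin> F" "A \<subseteq> F"
  shows "XX (insert x F) A b = XX F A b - b x"
    and "XX (insert x F) (insert x A) b = XX F A b + b x"
proof -
  show "XX (insert x F) A b = XX F A b - b x"
    unfolding XX_def using assms by (simp add: sum.insert sg_def subset_iff) (auto)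
  have "(\<Sum>n\<in>F. sg (insert x A) n * b n) = (\<Sum>n\<in>F. sg A n * b n)"
    by (rule sum.cong[OF refl]) (use assms in \<open>auto simp: sg_def\<close>)
  then show "XX (insert x F) (insert x A) b = XX F A b + b x"
    unfolding XX_def using assms by (simp add: sum.insert sg_def)
qed

lemma par2: "(cmod (z - w))\<^sup>2 + (cmod (z + w))\<^sup>2 = 2 * (cmod z)\<^sup>2 + 2 * (cmod w)\<^sup>2"
  unfolding cmod_power2 by (simp add: power2_eq_square algebra_simps)

lemma par4: "(cmod (z - w))^4 + (cmod (z + w))^4 \<le> 2 * (cmod z)^4 + 12 * (cmod z)\<^sup>2 * (cmod w)\<^sup>2 + 2 * (cmod w)^4"
proof -
  define A where "A = (cmod z)\<^sup>2"
  define B where "B = (cmod w)\<^sup>2"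
  define r where "r = Re z * Re w + Im z * Im w"
  have m: "(cmod (z - w))\<^sup>2 = A + B - 2 * r" unfolding A_def B_def r_def
    unfolding cmod_power2 by (simp add: power2_eq_square algebra_simps)
  have p: "(cmod (z + w))\<^sup>2 = A + B + 2 * r" unfolding A_def B_def r_def
    unfolding cmod_power2 by (simp add: power2_eq_square algebra_simps)
  have rAB: "r\<^sup>2 \<le> A * B"
  proof -
    have "A * B - r\<^sup>2 = (Re z * Im w - Im z * Re w)\<^sup>2" unfolding A_def B_def r_def
      unfolding cmod_power2 by (simp add: power2_eq_square algebra_simps)
    then show ?thesis by (metis diff_ge_0_iff_ge zero_le_power2)
  qed
  have "(cmod (z - w))^4 + (cmod (z + w))^4 = ((cmod (z - w))\<^sup>2)\<^sup>2 + ((cmod (z + w))\<^sup>2)\<^sup>2"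
    by simp
  also have "\<dots> = 2 * (A + B)\<^sup>2 + 8 * r\<^sup>2" unfolding m p by (simp add: power2_eq_square algebra_simps)
  also have "\<dots> \<le> 2 * (A + B)\<^sup>2 + 8 * (A * B)" using rAB by simp
  also have "\<dots> = 2 * A\<^sup>2 + 12 * A * B + 2 * B\<^sup>2" by (simp add: power2_eq_square algebra_simps)
  also have "\<dots> = 2 * (cmod z)^4 + 12 * (cmod z)\<^sup>2 * (cmod w)\<^sup>2 + 2 * (cmod w)^4"
    unfolding A_def B_def by simp
  finally show ?thesis .
qed

lemma mom2:
  assumes "finite D"
  shows "(\<Sum>A\<in>Pow D. (cmod (XX D A b))\<^sup>2) = 2 ^ card D * (\<Sum>n\<in>D. (cmod (b n))\<^sup>2)"
  using assms
proof (induction D rule: finite_induct)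
  case empty then show ?case by (simp add: XX_def)
next
  case (insert x F)
  have "(\<Sum>A\<in>Pow (insert x F). (cmod (XX (insert x F) A b))\<^sup>2)
     = (\<Sum>A\<in>Pow F. (cmod (XX (insert x F) A b))\<^sup>2 + (cmod (XX (insert x F) (insert x A) b))\<^sup>2)"
    by (rule pow_insert_sum[OF insert(1,2)])
  also have "\<dots> = (\<Sum>A\<in>Pow F. 2 * (cmod (XX F A b))\<^sup>2 + 2 * (cmod (b x))\<^sup>2)"
  proof (rule sum.cong[OF refl])
    fix A assume "A \<in> Pow F"
    then have AF: "A \<subseteq> F" by simp
    show "(cmod (XX (insert x F) A b))\<^sup>2 + (cmod (XX (insert x F) (insert x A) b))\<^sup>2
        = 2 * (cmod (XX F A b))\<^sup>2 + 2 * (cmod (b x))\<^sup>2"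
      unfolding XX_insert[OF insert(1,2) AF] by (rule par2)
  qed
  also have "\<dots> = 2 * (\<Sum>A\<in>Pow F. (cmod (XX F A b))\<^sup>2) + 2 * 2 ^ card F * (cmod (b x))\<^sup>2"
    by (simp add: sum.distrib sum_distrib_left card_Pow insert(1))
  also have "\<dots> = 2 ^ card (insert x F) * (\<Sum>n\<in>insert x F. (cmod (b n))\<^sup>2)"
    unfolding insert(3) using insert(1,2) by (simp add: algebra_simps)
  finally show ?case .
qed

lemma mom4:
  assumes "finite D"
  shows "(\<Sum>A\<in>Pow D. (cmod (XX D A b))^4) \<le> 3 * 2 ^ card D * (\<Sum>n\<in>D. (cmod (b n))\<^sup>2)\<^sup>2"
  using assms
proof (induction D rule: finite_induct)
  case empty then show ?case by (simp add: XX_def)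
next
  case (insert x F)
  define \<alpha> where "\<alpha> = (\<Sum>n\<in>F. (cmod (b n))\<^sup>2)"
  define \<beta> where "\<beta> = (cmod (b x))\<^sup>2"
  define m :: real where "m = 2 ^ card F"
  have \<alpha>0: "\<alpha> \<ge> 0" unfolding \<alpha>_def by (rule sum_nonneg) simp
  have \<beta>0: "\<beta> \<ge> 0" unfolding \<beta>_def by simp
  have m0: "m \<ge> 0" unfolding m_def by simp
  have S2: "(\<Sum>A\<in>Pow F. (cmod (XX F A b))\<^sup>2) = m * \<alpha>" unfolding m_def \<alpha>_def by (rule mom2[OF insert(1)])
  have S4: "(\<Sum>A\<in>Pow F. (cmod (XX F A b))^4) \<le> 3 * m * \<alpha>\<^sup>2" using insert(3) unfolding m_def \<alpha>_def .
  have "(\<Sum>A\<in>Pow (insert x F). (cmod (XX (insert x F) A b))^4)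
     = (\<Sum>A\<in>Pow F. (cmod (XX (insert x F) A b))^4 + (cmod (XX (insert x F) (insert x A) b))^4)"
    by (rule pow_insert_sum[OF insert(1,2)])
  also have "\<dots> \<le> (\<Sum>A\<in>Pow F. 2 * (cmod (XX F A b))^4 + 12 * \<beta> * (cmod (XX F A b))\<^sup>2 + 2 * \<beta>\<^sup>2)"
  proof (rule sum_mono)
    fix A assume "A \<in> Pow F"
    then have AF: "A \<subseteq> F" by simp
    have "(cmod (XX F A b - b x))^4 + (cmod (XX F A b + b x))^4 \<le>
       2 * (cmod (XX F A b))^4 + 12 * (cmod (XX F A b))\<^sup>2 * (cmod (b x))\<^sup>2 + 2 * (cmod (b x))^4"
      by (rule par4)
    moreover have "(cmod (b x))^4 = \<beta>\<^sup>2" unfolding \<beta>_def by (simp flip: power_mult)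
    moreover have "12 * (cmod (XX F A b))\<^sup>2 * (cmod (b x))\<^sup>2 = 12 * \<beta> * (cmod (XX F A b))\<^sup>2"
      unfolding \<beta>_def by (simp only: mult_ac)
    ultimately show "(cmod (XX (insert x F) A b))^4 + (cmod (XX (insert x F) (insert x A) b))^4
        \<le> 2 * (cmod (XX F A b))^4 + 12 * \<beta> * (cmod (XX F A b))\<^sup>2 + 2 * \<beta>\<^sup>2"
      unfolding XX_insert[OF insert(1,2) AF] by simp
  qed
  also have "\<dots> = 2 * (\<Sum>A\<in>Pow F. (cmod (XX F A b))^4) + 12 * \<beta> * (\<Sum>A\<in>Pow F. (cmod (XX F A b))\<^sup>2) + 2 * m * \<beta>\<^sup>2"
    unfolding m_def by (simp add: sum.distrib sum_distrib_left card_Pow insert(1))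
  also have "\<dots> \<le> 2 * (3 * m * \<alpha>\<^sup>2) + 12 * \<beta> * (m * \<alpha>) + 2 * m * \<beta>\<^sup>2"
    unfolding S2 using S4 by simp
  also have "\<dots> \<le> 3 * (2 * m) * (\<alpha> + \<beta>)\<^sup>2"
  proof -
    have "3 * (2 * m) * (\<alpha> + \<beta>)\<^sup>2 - (2 * (3 * m * \<alpha>\<^sup>2) + 12 * \<beta> * (m * \<alpha>) + 2 * m * \<beta>\<^sup>2) = 4 * m * \<beta>\<^sup>2"
      by (simp add: power2_eq_square algebra_simps)
    moreover have "4 * m * \<beta>\<^sup>2 \<ge> 0" using m0 by simp
    ultimately show ?thesis by linarith
  qed
  also have "\<dots> = 3 * 2 ^ card (insert x F) * (\<Sum>n\<in>insert x F. (cmod (b n))\<^sup>2)\<^sup>2"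
  proof -
    have "card (insert x F) = Suc (card F)" using insert(1,2) by simp
    moreover have "(\<Sum>n\<in>insert x F. (cmod (b n))\<^sup>2) = \<alpha> + \<beta>"
      unfolding \<alpha>_def \<beta>_def using insert(1,2) by simp
    ultimately show ?thesis unfolding m_def by simp
  qed
  finally show ?case .
qed

lemma khin1:
  assumes D: "finite D"
  shows "(\<Sum>A\<in>Pow D. cmod (XX D A b)) \<ge> 2 ^ card D * sqrt ((\<Sum>n\<in>D. (cmod (b n))\<^sup>2) / 3)"
proof -
  define u where "u A = cmod (XX D A b)" for A
  define \<beta> where "\<beta> = (\<Sum>n\<in>D. (cmod (b n))\<^sup>2)"
  define m :: real where "m = 2 ^ card D"
  define S1 where "S1 = (\<Sum>A\<in>Pow D. u A)"
  define S2 where "S2 = (\<Sum>A\<in>Pow D. (u A)\<^sup>2)"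
  define S3 where "S3 = (\<Sum>A\<in>Pow D. (u A)^3)"
  define S4 where "S4 = (\<Sum>A\<in>Pow D. (u A)^4)"
  have u0: "u A \<ge> 0" for A unfolding u_def by simp
  have \<beta>0: "\<beta> \<ge> 0" unfolding \<beta>_def by (rule sum_nonneg) simp
  have m0: "m > 0" unfolding m_def by simp
  have S1_0: "S1 \<ge> 0" unfolding S1_def by (rule sum_nonneg) (simp add: u0)
  have S3_0: "S3 \<ge> 0" unfolding S3_def by (rule sum_nonneg) (simp add: u0)
  have S2e: "S2 = m * \<beta>" unfolding S2_def u_def m_def \<beta>_def by (rule mom2[OF D])
  have S4b: "S4 \<le> 3 * m * \<beta>\<^sup>2" unfolding S4_def u_def m_def \<beta>_def by (rule mom4[OF D])
  have CS1: "S2\<^sup>2 \<le> S1 * S3"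
  proof -
    have "(\<Sum>A\<in>Pow D. sqrt (u A) * (u A * sqrt (u A)))\<^sup>2
        \<le> (\<Sum>A\<in>Pow D. (sqrt (u A))\<^sup>2) * (\<Sum>A\<in>Pow D. (u A * sqrt (u A))\<^sup>2)"
      by (rule Cauchy_Schwarz_ineq_sum)
    moreover have "sqrt (u A) * (u A * sqrt (u A)) = (u A)\<^sup>2" for A
      using u0[of A] by (simp add: power2_eq_square mult_ac)
    moreover have "(sqrt (u A))\<^sup>2 = u A" for A using u0[of A] by simp
    moreover have "(u A * sqrt (u A))\<^sup>2 = (u A)^3" for A
      using u0[of A] by (simp add: power_mult_distrib power2_eq_square power3_eq_cube)
    ultimately show ?thesis unfolding S1_def S2_def S3_def by simp
  qed
  have CS2: "S3\<^sup>2 \<le> S2 * S4"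
  proof -
    have "(\<Sum>A\<in>Pow D. u A * (u A)\<^sup>2)\<^sup>2 \<le> (\<Sum>A\<in>Pow D. (u A)\<^sup>2) * (\<Sum>A\<in>Pow D. ((u A)\<^sup>2)\<^sup>2)"
      by (rule Cauchy_Schwarz_ineq_sum)
    moreover have "u A * (u A)\<^sup>2 = (u A)^3" for A by (simp add: power2_eq_square power3_eq_cube)
    moreover have "((u A)\<^sup>2)\<^sup>2 = (u A)^4" for A by (simp flip: power_mult)
    ultimately show ?thesis unfolding S2_def S3_def S4_def by simp
  qed
  show ?thesis
  proof (cases "\<beta> = 0")
    case True
    then show ?thesis using S1_0 unfolding S1_def u_def \<beta>_def m_def by simp
  next
    case False
    then have \<beta>p: "\<beta> > 0" using \<beta>0 by simp
    have S2p: "S2 > 0" using S2e m0 \<beta>p by simp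
    have "S2^4 = (S2\<^sup>2)\<^sup>2" by (simp flip: power_mult)
    also have "\<dots> \<le> (S1 * S3)\<^sup>2" using CS1 S2p by (intro power_mono) auto
    also have "\<dots> = S1\<^sup>2 * S3\<^sup>2" by (simp add: power_mult_distrib)
    also have "\<dots> \<le> S1\<^sup>2 * (S2 * S4)" using CS2 by (intro mult_left_mono) auto
    finally have "S2 * S2^3 \<le> S2 * (S1\<^sup>2 * S4)" by (simp add: power_numeral_reduce mult_ac)
    then have "S2^3 \<le> S1\<^sup>2 * S4" using S2p by simp
    also have "\<dots> \<le> S1\<^sup>2 * (3 * m * \<beta>\<^sup>2)" using S4b by (intro mult_left_mono) auto
    finally have "(m * \<beta>) * (m * \<beta>) * (m * \<beta>) \<le> (3 * S1\<^sup>2) * (m * \<beta> * \<beta>)"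
      unfolding S2e by (simp add: power3_eq_cube power2_eq_square mult_ac)
    then have "(m * \<beta>) * m \<le> 3 * S1\<^sup>2" using m0 \<beta>p
      by (simp add: mult_ac)
    then have "m\<^sup>2 * (\<beta> / 3) \<le> S1\<^sup>2" by (simp add: power2_eq_square field_simps)
    then have "sqrt (m\<^sup>2 * (\<beta> / 3)) \<le> S1" by (rule real_le_lsqrt[OF S1_0])
    moreover have "sqrt (m\<^sup>2 * (\<beta> / 3)) = m * sqrt (\<beta> / 3)"
      using m0 by (simp only: real_sqrt_mult real_sqrt_abs abs_of_pos)
    ultimately show ?thesis unfolding S1_def u_def \<beta>_def m_def by simp
  qed
qed

lemma khin_exists:
  assumes D: "finite D" and Tf: "finite Tset"
  shows "\<exists>A\<subseteq>D. (\<Sum>t\<in>Tset. cmod (XX D A (\<lambda>n. b n t))) \<ge> (\<Sum>t\<in>Tset. sqrt ((\<Sum>n\<in>D. (cmod (b n t))\<^sup>2) / 3))"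
proof (rule ccontr)
  define R where "R = (\<Sum>t\<in>Tset. sqrt ((\<Sum>n\<in>D. (cmod (b n t))\<^sup>2) / 3))"
  assume "\<not> ?thesis"
  then have lt: "\<And>A. A \<in> Pow D \<Longrightarrow> (\<Sum>t\<in>Tset. cmod (XX D A (\<lambda>n. b n t))) < R"
    unfolding R_def by auto
  have cP: "card (Pow D) = 2 ^ card D" using D by (simp add: card_Pow)
  have "(\<Sum>A\<in>Pow D. \<Sum>t\<in>Tset. cmod (XX D A (\<lambda>n. b n t))) < of_nat (card (Pow D)) * R"
  proof (rule sum_bounded_above_strict[OF lt])
    show "0 < card (Pow D)" unfolding cP by simp
  qed
  also have "\<dots> = (\<Sum>t\<in>Tset. 2 ^ card D * sqrt ((\<Sum>n\<in>D. (cmod (b n t))\<^sup>2) / 3))"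
    unfolding R_def cP by (simp add: sum_distrib_left)
  also have "\<dots> \<le> (\<Sum>t\<in>Tset. \<Sum>A\<in>Pow D. cmod (XX D A (\<lambda>n. b n t)))"
    by (rule sum_mono) (rule khin1[OF D])
  also have "\<dots> = (\<Sum>A\<in>Pow D. \<Sum>t\<in>Tset. cmod (XX D A (\<lambda>n. b n t)))"
    by (rule sum.swap)
  finally show False by simp
qed

lemma blk_disj: "n \<in> blk k \<Longrightarrow> n \<in> blk k' \<Longrightarrow> k = k'"
proof (rule ccontr)
  assume a: "n \<in> blk k" "n \<in> blk k'" "k \<noteq> k'"
  have "\<And>k k'. n \<in> blk k \<Longrightarrow> n \<in> blk k' \<Longrightarrow> k < k' \<Longrightarrow> False"
  proof -
    fix k k' assume b: "n \<in> blk k" "n \<in> blk k'" "k < k'"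
    then have "2^k' < 2 * n" "n \<le> 2^k" unfolding blk_def by auto
    then have "2^k' < (2::nat)^(Suc k)" by simp
    then have "k' < Suc k" using power_less_imp_less_exp by (metis one_less_numeral_iff semiring_norm(76))
    then show False using b(3) by simp
  qed
  then show False using a by (metis linorder_neqE_nat)
qed

lemma big_block:
  assumes NB: "\<not> (\<exists>M::nat. \<forall>k. card (S \<inter> blk k) \<le> M)"
  shows "\<exists>m\<ge>k0. card (S \<inter> blk (m+2)) \<ge> B"
proof -
  define Mx where "Mx = B + (\<Sum>k\<le>k0+1. card (S \<inter> blk k))"
  obtain k where k: "card (S \<inter> blk k) > Mx" using NB by (meson not_le)
  have "k \<ge> k0 + 2"
  proof (rule ccontr)
    assume "\<not> k \<ge> k0 + 2"
    then have "k \<in> {..k0+1}" by simp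
    then have "card (S \<inter> blk k) \<le> (\<Sum>k\<le>k0+1. card (S \<inter> blk k))"
      by (rule member_le_sum) auto
    then show False using k unfolding Mx_def by simp
  qed
  moreover have "k - 2 + 2 = k" using \<open>k \<ge> k0 + 2\<close> by simp
  moreover have "B \<le> card (S \<inter> blk k)" using k unfolding Mx_def by simp
  ultimately show ?thesis by (intro exI[of _ "k - 2"]) auto
qed

definition nxt :: "nat set \<Rightarrow> nat \<Rightarrow> nat \<Rightarrow> nat" where
  "nxt S k0 B = (SOME m. m \<ge> k0 \<and> card (S \<inter> blk (m+2)) \<ge> B)"

primrec mm :: "nat set \<Rightarrow> nat \<Rightarrow> nat" where
  "mm S 0 = nxt S 0 0"
| "mm S (Suc r) = nxt S (mm S r + 2) (Suc r)"

lemma nxt_prop: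
  assumes NB: "\<not> (\<exists>M::nat. \<forall>k. card (S \<inter> blk k) \<le> M)"
  shows "nxt S k0 B \<ge> k0 \<and> card (S \<inter> blk (nxt S k0 B + 2)) \<ge> B"
  unfolding nxt_def by (rule someI_ex) (use big_block[OF NB] in blast)

lemma mm_card:
  assumes NB: "\<not> (\<exists>M::nat. \<forall>k. card (S \<inter> blk k) \<le> M)"
  shows "card (S \<inter> blk (mm S r + 2)) \<ge> r"
  by (cases r) (use nxt_prop[OF NB] in auto)

lemma mm_step:
  assumes NB: "\<not> (\<exists>M::nat. \<forall>k. card (S \<inter> blk k) \<le> M)"
  shows "mm S (Suc r) \<ge> mm S r + 2"
  using nxt_prop[OF NB] by simp

lemma mm_mono:
  assumes NB: "\<not> (\<exists>M::nat. \<forall>k. card (S \<inter> blk k) \<le> M)" and "r < r'"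
  shows "mm S r' \<ge> mm S r + 2"
  using assms(2)
proof (induction r')
  case 0 then show ?case by simp
next
  case (Suc r')
  show ?case
  proof (cases "r = r'")
    case True then show ?thesis using mm_step[OF NB] by simp
  next
    case False
    then have "r < r'" using Suc.prems by simp
    then show ?thesis using Suc.IH mm_step[OF NB, of r'] by simp
  qed
qed

lemma shift_sum:
  fixes h :: "nat \<Rightarrow> complex"
  assumes i: "i < q" and DD: "DD \<subseteq> {n. 2*q < n \<and> n \<le> 4*q}"
    and h0: "\<And>n. q < n \<Longrightarrow> n < 5*q \<Longrightarrow> n \<notin> DD \<Longrightarrow> h n = 0"
  shows "(\<Sum>j\<in>{q+1..4*q}. h (i + j)) = (\<Sum>n\<in>DD. h n)"
proof -
  have inj: "inj_on (\<lambda>j. i + j) {q+1..4*q}" by (simp add: inj_on_def)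
  have "(\<Sum>j\<in>{q+1..4*q}. h (i + j)) = (\<Sum>n\<in>(\<lambda>j. i + j) ` {q+1..4*q}. h n)"
    by (rule sum.reindex[OF inj, unfolded comp_def, symmetric])
  also have "\<dots> = (\<Sum>n\<in>DD. h n)"
  proof (rule sum.mono_neutral_right)
    show "finite ((\<lambda>j. i + j) ` {q+1..4*q})" by simp
    show "DD \<subseteq> (\<lambda>j. i + j) ` {q+1..4*q}"
    proof
      fix n assume "n \<in> DD"
      then have n: "2*q < n" "n \<le> 4*q" using DD by auto
      then have "n - i \<in> {q+1..4*q}" using i by auto
      moreover have "n = i + (n - i)" using n i by simp
      ultimately show "n \<in> (\<lambda>j. i + j) ` {q+1..4*q}" by blast
    qed
    show "\<forall>n\<in>(\<lambda>j. i + j) ` {q+1..4*q} - DD. h n = 0"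
    proof
      fix n assume "n \<in> (\<lambda>j. i + j) ` {q+1..4*q} - DD"
      then have n1: "n \<in> (\<lambda>j. i + j) ` {q+1..4*q}" and n2: "n \<notin> DD" by auto
      from n1 obtain j where j: "n = i + j" "j \<in> {q+1..4*q}" by (rule imageE)
      then show "h n = 0" using i n2 by (intro h0) auto
    qed
  qed
  finally show ?thesis .
qed

lemma stage_bound:
  fixes f \<sigma> :: "nat \<Rightarrow> complex" and q :: nat
  assumes q: "q > 0"
    and DD: "DD \<subseteq> {n. 2*q < n \<and> n \<le> 4*q}"
    and fD: "\<And>n. n \<in> DD \<Longrightarrow> f n = \<sigma> n"
    and fout: "\<And>n. q < n \<Longrightarrow> n < 5*q \<Longrightarrow> n \<notin> DD \<Longrightarrow> f n = 0"
    and K: "\<forall>T C. matrix_bound T C \<longrightarrow> matrix_bound (\<lambda>i j. f (i+j) * T i j) (K*C)"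
  shows "(1 / sqrt 3) * ((\<Sum>t<3*q. cmod (\<Sum>n\<in>DD. \<sigma> n * om (3*q) t n)) / real (3*q)) \<le> K"
proof -
  define Mo where "Mo = 3*q"
  have Mo0: "Mo > 0" unfolding Mo_def using q by simp
  define F where "F t = (\<Sum>n\<in>DD. \<sigma> n * om Mo t n)" for t
  define c where "c t = (if F t = 0 then 0 else cnj (F t) / complex_of_real (cmod (F t) * real Mo))" for t
  have cb: "cmod (c t) \<le> 1 / real Mo" for t
    unfolding c_def using Mo0 by (auto simp: norm_divide norm_mult)
  have cF: "c t * F t = complex_of_real (cmod (F t) / real Mo)" for t
  proof (cases "F t = 0")
    case True then show ?thesis unfolding c_def by simp
  next
    case False
    have "c t * F t = (F t * cnj (F t)) / complex_of_real (cmod (F t) * real Mo)"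
      unfolding c_def using False by (simp add: mult.commute)
    also have "\<dots> = complex_of_real ((cmod (F t))\<^sup>2) / complex_of_real (cmod (F t) * real Mo)"
      by (simp only: complex_norm_square)
    also have "\<dots> = complex_of_real ((cmod (F t))\<^sup>2 / (cmod (F t) * real Mo))"
      by (simp only: of_real_divide)
    also have "(cmod (F t))\<^sup>2 / (cmod (F t) * real Mo) = cmod (F t) / real Mo"
      using False by (simp add: power2_eq_square)
    finally show ?thesis .
  qed
  define Rw where "Rw = {..<q}"
  define Cw where "Cw = {q+1..4*q}"
  define Tm where "Tm i j = (if i \<in> Rw \<and> j \<in> Cw then \<Sum>t<Mo. c t * om Mo t i * om Mo t j else 0)" for i j
  have mbT: "matrix_bound Tm 1"
    unfolding Tm_def[abs_def]
    by (rule tm_bound[OF Mo0, of Rw 0 Cw "q+1" c]) (use cb in \<open>auto simp: Rw_def Cw_def Mo_def\<close>)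
  have mb2: "matrix_bound (\<lambda>i j. f (i+j) * Tm i j) K"
    using K mbT by fastforce
  define nn where "nn = 4*q+1"
  define a :: real where "a = 1 / sqrt (real q)"
  define b :: real where "b = 1 / sqrt (real (3*q))"
  define y where "y i = (if i \<in> Rw then complex_of_real a else 0)" for i
  define x where "x j = (if j \<in> Cw then complex_of_real b else 0)" for j
  have Rsub: "{..<nn} \<inter> Rw = Rw" unfolding nn_def Rw_def by auto
  have Csub: "{..<nn} \<inter> Cw = Cw" unfolding nn_def Cw_def by auto
  have cardR: "card Rw = q" unfolding Rw_def by simp
  have cardC: "card Cw = 3*q" unfolding Cw_def by simp
  have yn: "(\<Sum>i<nn. (cmod (y i))\<^sup>2) \<le> 1"
  proof -
    have "(\<Sum>i<nn. (cmod (y i))\<^sup>2) = (\<Sum>i<nn. if i \<in> Rw then a\<^sup>2 else 0)"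
      by (rule sum.cong) (auto simp: y_def)
    also have "\<dots> = (\<Sum>i\<in>{..<nn} \<inter> Rw. a\<^sup>2)" by (rule sum.inter_restrict[symmetric]) simp
    also have "\<dots> = real q * a\<^sup>2" unfolding Rsub using cardR by simp
    also have "\<dots> = 1" unfolding a_def using q by (simp add: power_divide)
    finally show ?thesis by simp
  qed
  have xn: "(\<Sum>j<nn. (cmod (x j))\<^sup>2) \<le> 1"
  proof -
    have "(\<Sum>j<nn. (cmod (x j))\<^sup>2) = (\<Sum>j<nn. if j \<in> Cw then b\<^sup>2 else 0)"
      by (rule sum.cong) (auto simp: x_def)
    also have "\<dots> = (\<Sum>j\<in>{..<nn} \<inter> Cw. b\<^sup>2)" by (rule sum.inter_restrict[symmetric]) simp
    also have "\<dots> = real (3*q) * b\<^sup>2" unfolding Csub using cardC by simp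
    also have "\<dots> = 1" unfolding b_def using q by (simp add: power_divide)
    finally show ?thesis by simp
  qed
  define V where "V = (\<Sum>i<nn. \<Sum>j<nn. y i * (f (i+j) * Tm i j) * x j)"
  have VK: "cmod V \<le> K" using mb2 xn yn unfolding matrix_bound_def V_def by blast
  define G where "G n = (\<Sum>t<Mo. c t * om Mo t n)" for n
  define \<alpha> where "\<alpha> = complex_of_real (a * b)"
  have pt: "y i * (f (i+j) * Tm i j) * x j = (if i \<in> Rw \<and> j \<in> Cw then \<alpha> * (f (i+j) * G (i+j)) else 0)" for i j
  proof (cases "i \<in> Rw \<and> j \<in> Cw")
    case True
    have "Tm i j = G (i+j)" unfolding Tm_def G_def using True by (simp add: mult.assoc om_mult)
    then show ?thesis using True unfolding y_def x_def \<alpha>_def by (simp add: mult_ac)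
  next
    case False then show ?thesis unfolding y_def x_def Tm_def by auto
  qed
  have "V = (\<Sum>i<nn. \<Sum>j<nn. if i \<in> Rw \<and> j \<in> Cw then \<alpha> * (f (i+j) * G (i+j)) else 0)"
    unfolding V_def pt ..
  also have "\<dots> = (\<Sum>i\<in>{..<nn} \<inter> Rw. \<Sum>j\<in>{..<nn} \<inter> Cw. \<alpha> * (f (i+j) * G (i+j)))"
    by (rule sum_if_restrict) auto
  also have "\<dots> = (\<Sum>i\<in>Rw. \<Sum>n\<in>DD. \<alpha> * (f n * G n))"
    unfolding Rsub Csub
  proof (rule sum.cong[OF refl])
    fix i assume "i \<in> Rw"
    then have i: "i < q" unfolding Rw_def by simp
    show "(\<Sum>j\<in>Cw. \<alpha> * (f (i+j) * G (i+j))) = (\<Sum>n\<in>DD. \<alpha> * (f n * G n))"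
      unfolding Cw_def by (rule shift_sum[OF i DD, where h="\<lambda>n. \<alpha> * (f n * G n)"]) (simp add: fout)
  qed
  also have "\<dots> = of_nat q * (\<alpha> * (\<Sum>n\<in>DD. f n * G n))"
    using cardR by (simp add: sum_distrib_left)
  also have "(\<Sum>n\<in>DD. f n * G n) = (\<Sum>t<Mo. c t * F t)"
  proof -
    have "(\<Sum>n\<in>DD. f n * G n) = (\<Sum>n\<in>DD. \<Sum>t<Mo. c t * (\<sigma> n * om Mo t n))"
      unfolding G_def by (rule sum.cong[OF refl]) (simp add: fD sum_distrib_left mult_ac)
    also have "\<dots> = (\<Sum>t<Mo. \<Sum>n\<in>DD. c t * (\<sigma> n * om Mo t n))" by (rule sum.swap)
    also have "\<dots> = (\<Sum>t<Mo. c t * F t)" unfolding F_def by (simp add: sum_distrib_left)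
    finally show ?thesis .
  qed
  also have "(\<Sum>t<Mo. c t * F t) = complex_of_real ((\<Sum>t<Mo. cmod (F t)) / real Mo)"
    by (simp only: cF of_real_sum sum_divide_distrib)
  finally have Ve: "V = complex_of_real (real q * (a * b) * ((\<Sum>t<Mo. cmod (F t)) / real Mo))"
    unfolding \<alpha>_def by simp
  have ab: "real q * (a * b) = 1 / sqrt 3"
  proof -
    have "sqrt (real (3*q)) = sqrt 3 * sqrt (real q)" by (simp add: real_sqrt_mult)
    moreover have "sqrt (real q) * sqrt (real q) = real q" using q by simp
    ultimately show ?thesis unfolding a_def b_def using q by (simp add: field_simps)
  qed
  have nonneg: "0 \<le> (1 / sqrt 3) * ((\<Sum>t<Mo. cmod (F t)) / real Mo)"
    by (intro mult_nonneg_nonneg divide_nonneg_nonneg sum_nonneg) auto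
  have "cmod V = (1 / sqrt 3) * ((\<Sum>t<Mo. cmod (F t)) / real Mo)"
    by (simp only: Ve ab norm_of_real abs_of_nonneg[OF nonneg])
  then show ?thesis using VK unfolding F_def Mo_def by simp
qed

lemma one_to_three:
  assumes SB: "schur_bounded (hankel_pattern S)"
  shows "\<exists>M::nat. \<forall>k. card (S \<inter> blk k) \<le> M"
proof (rule ccontr)
  assume NB: "\<not> (\<exists>M::nat. \<forall>k. card (S \<inter> blk k) \<le> M)"
  define D where "D r = S \<inter> blk (mm S r + 2)" for r
  have Dfin: "finite (D r)" for r unfolding D_def by simp
  have Duniq: "r = r'" if "n \<in> D r" "n \<in> D r'" for n r r'
  proof (rule ccontr)
    assume ne: "r \<noteq> r'"
    have "mm S r + 2 = mm S r' + 2" using blk_disj that unfolding D_def by blast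
    moreover have "mm S r \<noteq> mm S r'"
      using ne mm_mono[OF NB, of r r'] mm_mono[OF NB, of r' r] by (cases "r < r'") auto
    ultimately show False by simp
  qed
  have Dmem: "n \<in> D r \<Longrightarrow> 2 * 2 ^ mm S r < n \<and> n \<le> 4 * 2 ^ mm S r" for n r
    unfolding D_def blk_def by (auto simp: power_add)
  have window: "r' = r" if n: "n \<in> D r'" "2 ^ mm S r < n" "n < 5 * 2 ^ mm S r" for n r r'
  proof (rule ccontr)
    assume ne: "r' \<noteq> r"
    show False
    proof (cases "r' < r")
      case True
      then have "mm S r' + 2 \<le> mm S r" using mm_mono[OF NB] by blast
      then have "(2::nat) ^ (mm S r' + 2) \<le> 2 ^ mm S r" by (intro power_increasing) auto
      moreover have "n \<le> 4 * 2 ^ mm S r'" using Dmem[OF n(1)] by simp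
      ultimately show False using n(2) by (simp add: power_add)
    next
      case False
      then have "r < r'" using ne by simp
      then have "mm S r + 2 \<le> mm S r'" using mm_mono[OF NB] by blast
      then have "(2::nat) ^ (mm S r + 2) \<le> 2 ^ mm S r'" by (intro power_increasing) auto
      moreover have "2 * 2 ^ mm S r' < n" using Dmem[OF n(1)] by simp
      ultimately show False using n(3) by (simp add: power_add)
    qed
  qed
  define Mo :: "nat \<Rightarrow> nat" where "Mo r = 3 * 2 ^ mm S r" for r
  define good where "good r A \<longleftrightarrow> A \<subseteq> D r \<and>
      (\<Sum>t<Mo r. cmod (XX (D r) A (\<lambda>n. om (Mo r) t n))) \<ge>
      (\<Sum>t<Mo r. sqrt ((\<Sum>n\<in>D r. (cmod (om (Mo r) t n))\<^sup>2) / 3))" for r A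
  have ex_good: "\<exists>A. good r A" for r
    using khin_exists[OF Dfin, where Tset="{..<Mo r}" and b="\<lambda>n t. om (Mo r) t n"] unfolding good_def by auto
  define AA where "AA r = (SOME A. good r A)" for r
  have AA: "good r (AA r)" for r unfolding AA_def by (rule someI_ex[OF ex_good])
  define rr where "rr n = (SOME r. n \<in> D r)" for n
  define f where "f n = (if \<exists>r. n \<in> D r then sg (AA (rr n)) n else 0)" for n
  have fD: "f n = sg (AA r) n" if "n \<in> D r" for n r
  proof -
    have "n \<in> D (rr n)" unfolding rr_def using that by (rule someI)
    then have "rr n = r" using Duniq that by blast
    then show ?thesis unfolding f_def using that by auto
  qed
  define s where "s i j = f (i + j)" for i j
  have s0: "\<forall>i j. (i, j) \<notin> hankel_pattern S \<longrightarrow> s i j = 0"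
    unfolding s_def f_def hankel_pattern_def D_def by auto
  have s1: "\<forall>i j. cmod (s i j) \<le> 1"
    unfolding s_def f_def sg_def by auto
  obtain K where K: "\<forall>T C. matrix_bound T C \<longrightarrow> matrix_bound (\<lambda>i j. s i j * T i j) (K*C)"
    using SB s0 s1 unfolding schur_bounded_def bounded_schur_multiplier_def by blast
  obtain r :: nat where r: "9 * K\<^sup>2 < real r" using reals_Archimedean2 by blast
  define q :: nat where "q = 2 ^ mm S r"
  have q0: "q > 0" unfolding q_def by simp
  have DDsub: "D r \<subseteq> {n. 2*q < n \<and> n \<le> 4*q}" using Dmem unfolding q_def by auto
  have fout: "f n = 0" if "q < n" "n < 5*q" "n \<notin> D r" for n
  proof (cases "\<exists>r'. n \<in> D r'")
    case True
    then obtain r' where r': "n \<in> D r'" by blast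
    then have "r' = r" using window that unfolding q_def by blast
    then show ?thesis using r' that by simp
  next
    case False then show ?thesis unfolding f_def by simp
  qed
  have Kf: "\<forall>T C. matrix_bound T C \<longrightarrow> matrix_bound (\<lambda>i j. f (i+j) * T i j) (K*C)"
    using K unfolding s_def .
  have SBd: "(1 / sqrt 3) * ((\<Sum>t<3*q. cmod (\<Sum>n\<in>D r. sg (AA r) n * om (3*q) t n)) / real (3*q)) \<le> K"
    by (rule stage_bound[OF q0 DDsub _ fout Kf]) (rule fD)
  define N where "N = card (D r)"
  have Nr: "N \<ge> r" unfolding N_def D_def using mm_card[OF NB] .
  define \<Sigma> where "\<Sigma> = (\<Sum>t<3*q. cmod (\<Sum>n\<in>D r. sg (AA r) n * om (3*q) t n))"
  have "\<Sigma> \<ge> real (3*q) * sqrt (real N / 3)"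
  proof -
    have "(\<Sum>t<Mo r. cmod (XX (D r) (AA r) (\<lambda>n. om (Mo r) t n))) \<ge>
      (\<Sum>t<Mo r. sqrt ((\<Sum>n\<in>D r. (cmod (om (Mo r) t n))\<^sup>2) / 3))" using AA unfolding good_def by blast
    moreover have "(\<Sum>t<Mo r. sqrt ((\<Sum>n\<in>D r. (cmod (om (Mo r) t n))\<^sup>2) / 3)) = real (3*q) * sqrt (real N / 3)"
      unfolding N_def Mo_def q_def by simp
    moreover have "(\<Sum>t<Mo r. cmod (XX (D r) (AA r) (\<lambda>n. om (Mo r) t n))) = \<Sigma>"
      unfolding XX_def Mo_def q_def \<Sigma>_def ..
    ultimately show ?thesis by simp
  qed
  then have h1: "sqrt (real N / 3) \<le> \<Sigma> / real (3*q)" using q0 by (simp add: le_divide_eq mult.commute)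
  have "(1 / sqrt 3) * (sqrt (real N / 3)) \<le> (1 / sqrt 3) * (\<Sigma> / real (3*q))"
    by (rule mult_left_mono[OF h1]) simp
  then have X: "(1 / sqrt 3) * (sqrt (real N / 3)) \<le> K" using SBd unfolding \<Sigma>_def by linarith
  have e: "(1 / sqrt 3) * (sqrt (real N / 3)) = sqrt (real N) / 3"
    by (simp add: real_sqrt_divide)
  from X have "sqrt (real N) / 3 \<le> K" unfolding e .
  then have "sqrt (real N) \<le> 3 * K" by linarith
  moreover have "3 * K < sqrt (real N)"
  proof -
    have "(3 * K)\<^sup>2 < real N" using r Nr by (simp add: power_mult_distrib)
    then have "\<bar>3 * K\<bar> < sqrt (real N)" using real_less_rsqrt by (metis real_sqrt_abs real_sqrt_less_iff)
    then show ?thesis by simp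
  qed
  ultimately show False by simp
qed

theorem proposition3p1:
  fixes S :: "nat set"
  shows "(schur_bounded (hankel_pattern S)
            \<longleftrightarrow> (\<exists>R C. hankel_pattern S = R \<union> C \<and> row_finite R \<and> column_finite C))
       \<and> ((\<exists>R C. hankel_pattern S = R \<union> C \<and> row_finite R \<and> column_finite C)
            \<longleftrightarrow> (\<exists>M::nat. \<forall>k::nat. card {n \<in> S. 2 ^ k < 2 * n \<and> n \<le> 2 ^ k} \<le> M))
       \<and> ((\<exists>M::nat. \<forall>k::nat. card {n \<in> S. 2 ^ k < 2 * n \<and> n \<le> 2 ^ k} \<le> M)
            \<longleftrightarrow> (\<exists>F. finite F \<and> (\<forall>A\<in>F. lacunary A) \<and> S = \<Union>F))"
proof -
  have e: "{n \<in> S. 2 ^ k < 2 * n \<and> n \<le> 2 ^ k} = S \<inter> blk k" for k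
    unfolding blk_def by auto
  have P23: "(\<exists>R C. hankel_pattern S = R \<union> C \<and> row_finite R \<and> column_finite C)
      \<longleftrightarrow> (\<exists>M::nat. \<forall>k. card (S \<inter> blk k) \<le> M)"
  proof
    assume "\<exists>R C. hankel_pattern S = R \<union> C \<and> row_finite R \<and> column_finite C"
    then obtain R C where "hankel_pattern S = R \<union> C" "row_finite R" "column_finite C" by blast
    then show "\<exists>M::nat. \<forall>k. card (S \<inter> blk k) \<le> M" by (rule two_to_three)
  next
    assume "\<exists>M::nat. \<forall>k. card (S \<inter> blk k) \<le> M"
    then obtain M where "\<forall>k. card (S \<inter> blk k) \<le> M" by blast
    then show "\<exists>R C. hankel_pattern S = R \<union> C \<and> row_finite R \<and> column_finite C" by (rule three_to_two)
  qed
  have P12: "schur_bounded (hankel_pattern S)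
      \<longleftrightarrow> (\<exists>R C. hankel_pattern S = R \<union> C \<and> row_finite R \<and> column_finite C)"
  proof
    assume "schur_bounded (hankel_pattern S)"
    then have "\<exists>M::nat. \<forall>k. card (S \<inter> blk k) \<le> M" by (rule one_to_three)
    then show "\<exists>R C. hankel_pattern S = R \<union> C \<and> row_finite R \<and> column_finite C" using P23 by simp
  next
    assume "\<exists>R C. hankel_pattern S = R \<union> C \<and> row_finite R \<and> column_finite C"
    then obtain R C where "hankel_pattern S = R \<union> C" "row_finite R" "column_finite C" by blast
    then show "schur_bounded (hankel_pattern S)" by (rule two_to_one)
  qed
  have P34: "(\<exists>M::nat. \<forall>k. card (S \<inter> blk k) \<le> M)
      \<longleftrightarrow> (\<exists>F. finite F \<and> (\<forall>A\<in>F. lacunary A) \<and> S = \<Union>F)"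
  proof
    assume "\<exists>M::nat. \<forall>k. card (S \<inter> blk k) \<le> M"
    then obtain M where "\<forall>k. card (S \<inter> blk k) \<le> M" by blast
    then show "\<exists>F. finite F \<and> (\<forall>A\<in>F. lacunary A) \<and> S = \<Union>F" by (rule three_to_four)
  next
    assume "\<exists>F. finite F \<and> (\<forall>A\<in>F. lacunary A) \<and> S = \<Union>F"
    then obtain F where "finite F" "\<forall>A\<in>F. lacunary A" "S = \<Union>F" by blast
    then show "\<exists>M::nat. \<forall>k. card (S \<inter> blk k) \<le> M" by (rule four_to_three)
  qed
  show ?thesis unfolding e by (intro conjI P12 P23 P34)
qed

end
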